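(* There exists an absolute constant $C>0$ such that for every prime $p$, the group $G=\mathrm{PSL}(2,p)$ satisfies $M(G)\le C\,p^{8/3}$.
   Context: For a finite group $G$, a multiplicative 3-matching of size $m$ in $G$ is a triple of families $\{a_i\}_{i=1}^m,\{b_i\}_{i=1}^m,\{c_i\}_{i=1}^m$ of elements of $G$ such that for all $i,j,l\in\{1,\dots,m\}$, $a_ib_jc_l=1$ if and only if $i=j=l$. $M(G)$ denotes the largest $m$ for which a multiplicative 3-matching of size $m$ exists in $G$. *)

theory Defs
  imports Complex_Main "HOL-Algebra.Coset" "HOL-Computational_Algebra.Primes"
begin

text \<open>SL(2,p): 2x2 matrices (a,b,c,d) = [[a,b],[c,d]] with entries in {0..p-1},
  determinant 1 mod p, multiplication mod p.\<close>
definition SL2 :: "int \<Rightarrow> (int \<times> int \<times> int \<times> int) monoid" where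
  "SL2 p = \<lparr> carrier = {(a,b,c,d). a \<in> {0..<p} \<and> b \<in> {0..<p} \<and> c \<in> {0..<p} \<and> d \<in> {0..<p}
                                 \<and> (a*d - b*c) mod p = 1},
            monoid.mult = (\<lambda>(a,b,c,d) (e,f,g,h).
                      ((a*e + b*g) mod p, (a*f + b*h) mod p, (c*e + d*g) mod p, (c*f + d*h) mod p)),
            one = (1, 0, 0, 1) \<rparr>"

definition SL2_center :: "int \<Rightarrow> (int \<times> int \<times> int \<times> int) set" where
  "SL2_center p = {(1, 0, 0, 1), (p - 1, 0, 0, p - 1)}"

definition PSL2 :: "int \<Rightarrow> (int \<times> int \<times> int \<times> int) set monoid" where
  "PSL2 p = SL2 p Mod SL2_center p"

definition mult_3_matching :: "('a, 'b) monoid_scheme \<Rightarrow> nat \<Rightarrow> bool" where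
  "mult_3_matching G m \<longleftrightarrow>
     (\<exists>a b c. (\<forall>i\<in>{1..m}. a i \<in> carrier G \<and> b i \<in> carrier G \<and> c i \<in> carrier G) \<and>
        (\<forall>i\<in>{1..m}. \<forall>j\<in>{1..m}. \<forall>l\<in>{1..m}.
            (a i \<otimes>\<^bsub>G\<^esub> b j \<otimes>\<^bsub>G\<^esub> c l = \<one>\<^bsub>G\<^esub> \<longleftrightarrow> i = j \<and> j = l)))"

definition M :: "('a, 'b) monoid_scheme \<Rightarrow> nat" where
  "M G = Max {m. mult_3_matching G m}"

end

theory Submission
  imports Defs "HOL-Analysis.Analysis" "HOL-Number_Theory.Number_Theory"
begin

definition ipS :: "'a set \<Rightarrow> ('a \<Rightarrow> complex) \<Rightarrow> ('a \<Rightarrow> complex) \<Rightarrow> complex" where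
  "ipS X f g = (\<Sum>x\<in>X. f x * cnj (g x))"
definition nrS :: "'a set \<Rightarrow> ('a \<Rightarrow> complex) \<Rightarrow> real" where
  "nrS X f = (\<Sum>x\<in>X. (cmod (f x))^2)"

lemma zcnj: "z * cnj z = complex_of_real ((cmod z)^2)"
  by (rule complex_norm_square[symmetric])

lemma nrS_ip: "complex_of_real (nrS X f) = ipS X f f"
  unfolding nrS_def ipS_def by (simp add: zcnj del: of_real_power)

lemma nrS_nonneg: "nrS X f \<ge> 0"
  unfolding nrS_def by (simp add: sum_nonneg)

lemma nrS_zero: "finite X \<Longrightarrow> nrS X f = 0 \<Longrightarrow> x \<in> X \<Longrightarrow> f x = 0"
  unfolding nrS_def by (subst (asm) sum_nonneg_eq_0_iff) auto

lemma ipS_cong: "(\<And>x. x \<in> X \<Longrightarrow> f x = f' x) \<Longrightarrow> (\<And>x. x \<in> X \<Longrightarrow> g x = g' x) \<Longrightarrow> ipS X f g = ipS X f' g'"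
  unfolding ipS_def by simp
lemma nrS_cong: "(\<And>x. x \<in> X \<Longrightarrow> f x = f' x) \<Longrightarrow> nrS X f = nrS X f'"
  unfolding nrS_def by simp

lemma ipS_sum_left: "ipS X (\<lambda>x. \<Sum>j\<in>J. v j x) w = (\<Sum>j\<in>J. ipS X (v j) w)"
  unfolding ipS_def by (simp add: sum_distrib_right sum.swap[of _ J])
lemma ipS_sum_right: "ipS X w (\<lambda>x. \<Sum>j\<in>J. v j x) = (\<Sum>j\<in>J. ipS X w (v j))"
  unfolding ipS_def by (simp add: cnj_sum sum_distrib_left sum.swap[of _ J])
lemma ipS_scale_left: "ipS X (\<lambda>x. c * f x) g = c * ipS X f g"
  unfolding ipS_def by (simp add: sum_distrib_left mult.assoc)
lemma ipS_scale_right: "ipS X f (\<lambda>x. c * g x) = cnj c * ipS X f g"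
  unfolding ipS_def by (simp add: sum_distrib_left algebra_simps)
lemma ipS_diff_left: "ipS X (\<lambda>x. f x - g x) h = ipS X f h - ipS X g h"
  unfolding ipS_def by (simp add: sum_subtractf algebra_simps)
lemma ipS_diff_right: "ipS X h (\<lambda>x. f x - g x) = ipS X h f - ipS X h g"
  unfolding ipS_def by (simp add: sum_subtractf algebra_simps)
lemma ipS_cnj: "ipS X g f = cnj (ipS X f g)"
  unfolding ipS_def by (simp add: cnj_sum mult.commute)

lemma ipS_double_sum_orth:
  assumes "finite J" "\<And>i j. i \<in> J \<Longrightarrow> j \<in> J \<Longrightarrow> i \<noteq> j \<Longrightarrow> ipS X (v i) (v j) = 0"
  shows "ipS X (\<lambda>x. \<Sum>j\<in>J. c j * v j x) (\<lambda>x. \<Sum>j\<in>J. c j * v j x)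
       = (\<Sum>j\<in>J. c j * cnj (c j) * ipS X (v j) (v j))"
proof -
  have "ipS X (\<lambda>x. \<Sum>j\<in>J. c j * v j x) (\<lambda>x. \<Sum>j\<in>J. c j * v j x)
      = (\<Sum>i\<in>J. \<Sum>j\<in>J. c i * cnj (c j) * ipS X (v i) (v j))"
    by (simp add: ipS_sum_left ipS_sum_right ipS_scale_left ipS_scale_right sum_distrib_left mult.assoc)
  also have "\<dots> = (\<Sum>i\<in>J. c i * cnj (c i) * ipS X (v i) (v i))"
  proof (rule sum.cong[OF refl])
    fix i assume i: "i \<in> J"
    have "(\<Sum>j\<in>J. c i * cnj (c j) * ipS X (v i) (v j)) = (\<Sum>j\<in>{i}. c i * cnj (c j) * ipS X (v i) (v j))"
      by (rule sum.mono_neutral_right) (use assms i in auto)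
    then show "(\<Sum>j\<in>J. c i * cnj (c j) * ipS X (v i) (v j)) = c i * cnj (c i) * ipS X (v i) (v i)" by simp
  qed
  finally show ?thesis .
qed

lemma pythagoras:
  assumes "finite J" "\<And>i j. i \<in> J \<Longrightarrow> j \<in> J \<Longrightarrow> i \<noteq> j \<Longrightarrow> ipS X (v i) (v j) = 0"
  shows "nrS X (\<lambda>x. \<Sum>j\<in>J. v j x) = (\<Sum>j\<in>J. nrS X (v j))"
proof -
  have "complex_of_real (nrS X (\<lambda>x. \<Sum>j\<in>J. v j x)) = ipS X (\<lambda>x. \<Sum>j\<in>J. 1 * v j x) (\<lambda>x. \<Sum>j\<in>J. 1 * v j x)"
    by (simp add: nrS_ip)
  also have "\<dots> = (\<Sum>j\<in>J. ipS X (v j) (v j))"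
    by (subst ipS_double_sum_orth[OF assms]) auto
  also have "\<dots> = complex_of_real (\<Sum>j\<in>J. nrS X (v j))"
    by (simp add: nrS_ip)
  finally show ?thesis by (simp only: of_real_eq_iff)
qed

lemma bessel:
  assumes "finite J" "\<And>i j. i \<in> J \<Longrightarrow> j \<in> J \<Longrightarrow> i \<noteq> j \<Longrightarrow> ipS X (v i) (v j) = 0"
    and pos: "\<And>j. j \<in> J \<Longrightarrow> nrS X (v j) > 0"
  shows "(\<Sum>j\<in>J. (cmod (ipS X (v j) k))^2 / nrS X (v j)) \<le> nrS X k"
proof -
  define c where "c j = ipS X k (v j) / complex_of_real (nrS X (v j))" for j
  define s where "s x = (\<Sum>j\<in>J. c j * v j x)" for x
  define Q where "Q = (\<Sum>j\<in>J. (cmod (ipS X (v j) k))^2 / nrS X (v j))"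
  have cm: "cmod (ipS X (v j) k) = cmod (ipS X k (v j))" for j
    by (subst ipS_cnj) simp
  have ss: "ipS X s s = complex_of_real Q"
  proof -
    have "ipS X s s = (\<Sum>j\<in>J. c j * cnj (c j) * ipS X (v j) (v j))"
      unfolding s_def by (rule ipS_double_sum_orth[OF assms(1,2)])
    also have "\<dots> = (\<Sum>j\<in>J. complex_of_real ((cmod (ipS X (v j) k))^2 / nrS X (v j)))"
    proof (rule sum.cong[OF refl])
      fix j assume j: "j \<in> J"
      have n: "nrS X (v j) \<noteq> 0" using pos[OF j] by simp
      have "c j * cnj (c j) * ipS X (v j) (v j) = ipS X k (v j) * cnj (ipS X k (v j)) / complex_of_real (nrS X (v j))"
        unfolding c_def using n by (simp add: nrS_ip[symmetric] field_simps power2_eq_square)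
      also have "\<dots> = complex_of_real ((cmod (ipS X (v j) k))^2 / nrS X (v j))"
        by (simp add: cm zcnj del: of_real_power)
      finally show "c j * cnj (c j) * ipS X (v j) (v j) = complex_of_real ((cmod (ipS X (v j) k))^2 / nrS X (v j))" .
    qed
    finally show ?thesis unfolding Q_def by simp
  qed
  have ks: "ipS X k s = complex_of_real Q"
  proof -
    have "ipS X k s = (\<Sum>j\<in>J. cnj (c j) * ipS X k (v j))"
      unfolding s_def by (simp add: ipS_sum_right ipS_scale_right)
    also have "\<dots> = (\<Sum>j\<in>J. complex_of_real ((cmod (ipS X (v j) k))^2 / nrS X (v j)))"
    proof (rule sum.cong[OF refl])
      fix j assume j: "j \<in> J"
      show "cnj (c j) * ipS X k (v j) = complex_of_real ((cmod (ipS X (v j) k))^2 / nrS X (v j))"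
        unfolding c_def by (simp add: cm zcnj mult.commute del: of_real_power)
    qed
    finally show ?thesis unfolding Q_def by simp
  qed
  have sk: "ipS X s k = complex_of_real Q"
    using ks by (subst ipS_cnj) simp
  have "0 \<le> nrS X (\<lambda>x. k x - s x)" by (rule nrS_nonneg)
  moreover have "complex_of_real (nrS X (\<lambda>x. k x - s x)) = complex_of_real (nrS X k - Q)"
    by (simp add: nrS_ip ipS_diff_left ipS_diff_right ks sk ss)
  ultimately show ?thesis unfolding Q_def by (simp only: of_real_eq_iff)
qed

definition omg :: "nat \<Rightarrow> complex" where "omg p = exp (2 * pi * \<i> / of_nat p)"

lemma omg_pow: "omg p ^ k = exp (of_nat k * (2 * pi * \<i> / of_nat p))"
  unfolding omg_def by (rule exp_of_nat_mult[symmetric])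

lemma cmod_omg_pow: "cmod (omg p ^ k) = 1"
  unfolding omg_pow by (simp add: norm_exp_eq_Re)

lemma omg_cnj_mult: "cnj (omg p ^ k) * omg p ^ k = 1"
  using cmod_omg_pow[of p k] by (metis complex_norm_square mult.commute of_real_1 power_one)

lemma omg_p: "p > 0 \<Longrightarrow> omg p ^ p = 1"
proof -
  assume "p > 0"
  then have "of_nat p * (2 * pi * \<i> / of_nat p) = 2 * pi * \<i>" by simp
  then show ?thesis unfolding omg_pow by simp
qed

lemma omg_pow_eq1: assumes "p > 0" "omg p ^ k = 1" shows "p dvd k"
proof -
  from assms(2) obtain n :: int where n: "Im (of_nat k * (2 * pi * \<i> / of_nat p)) = real_of_int (2 * n) * pi"
    unfolding omg_pow exp_eq_1 by blast
  have "real k * (2 * pi) / real p = real_of_int (2 * n) * pi" using n by simp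
  then have "real k = real p * real_of_int n" using assms(1) by (simp add: field_simps)
  then have "int k = int p * n" by (metis of_int_eq_iff of_int_mult of_int_of_nat_eq)
  then show ?thesis by (metis dvd_triv_left int_dvd_int_iff)
qed

lemma omg_pow_inj: assumes "p > 0" "omg p ^ s = omg p ^ t" shows "[s = t] (mod p)"
proof -
  have nz: "omg p ^ k \<noteq> 0" for k by (metis cmod_omg_pow norm_zero zero_neq_one)
  show ?thesis
  proof (cases "s \<le> t")
    case True
    then have "omg p ^ t = omg p ^ s * omg p ^ (t - s)" by (simp flip: power_add)
    then have "omg p ^ (t - s) = 1" using assms(2) nz[of s] by (metis mult_cancel_left1)
    then have "p dvd t - s" using omg_pow_eq1 assms(1) by blast
    then show ?thesis using True by (metis cong_altdef_nat cong_sym)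
  next
    case False
    then have "omg p ^ s = omg p ^ t * omg p ^ (s - t)" by (simp flip: power_add)
    then have "omg p ^ (s - t) = 1" using assms(2) nz[of t] by (metis mult_cancel_left1)
    then have "p dvd s - t" using omg_pow_eq1 assms(1) by blast
    then show ?thesis using False by (metis cong_altdef_nat nat_le_linear)
  qed
qed

definition Rt :: "('a, 'b) monoid_scheme \<Rightarrow> 'a \<Rightarrow> ('a \<Rightarrow> complex) \<Rightarrow> 'a \<Rightarrow> complex" where
  "Rt G g f = (\<lambda>x. f (x \<otimes>\<^bsub>G\<^esub> g))"
definition Tc :: "('a, 'b) monoid_scheme \<Rightarrow> nat \<Rightarrow> (nat \<Rightarrow> 'a) \<Rightarrow> ('a \<Rightarrow> complex) \<Rightarrow> 'a \<Rightarrow> complex" where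
  "Tc G m a f = (\<lambda>y. \<Sum>i\<in>{1..m}. f (inv\<^bsub>G\<^esub> (a i) \<otimes>\<^bsub>G\<^esub> y))"
definition ms :: "('a, 'b) monoid_scheme \<Rightarrow> ('a \<Rightarrow> complex) \<Rightarrow> complex" where
  "ms G f = (\<Sum>x\<in>carrier G. f x)"
definition Pj :: "('a, 'b) monoid_scheme \<Rightarrow> nat \<Rightarrow> 'a \<Rightarrow> nat \<Rightarrow> ('a \<Rightarrow> complex) \<Rightarrow> 'a \<Rightarrow> complex" where
  "Pj G p u j f = (\<lambda>x. \<Sum>k<p. cnj (omg p) ^ (j * k) * f (x \<otimes>\<^bsub>G\<^esub> u [^]\<^bsub>G\<^esub> k))"
definition Eig :: "('a, 'b) monoid_scheme \<Rightarrow> 'a \<Rightarrow> complex \<Rightarrow> ('a \<Rightarrow> complex) \<Rightarrow> bool" where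
  "Eig G u z v \<longleftrightarrow> (\<forall>x\<in>carrier G. v (x \<otimes>\<^bsub>G\<^esub> u) = z * v x)"

lemma sum_cyclic_shift: "h p = h 0 \<Longrightarrow> (\<Sum>k<p. h (Suc k)) = (\<Sum>k<(p::nat). (h k :: complex))"
proof -
  assume "h p = h 0"
  have "(\<Sum>k<Suc p. h k) = h 0 + (\<Sum>k<p. h (Suc k))" by (rule sum.lessThan_Suc_shift)
  moreover have "(\<Sum>k<Suc p. h k) = (\<Sum>k<p. h k) + h p" by simp
  ultimately have "h 0 + (\<Sum>k<p. h k) = h 0 + (\<Sum>k<p. h (Suc k))" using \<open>h p = h 0\<close> by (simp add: add.commute)
  then show ?thesis by simp
qed

locale qr = group G for G (structure) +
  fixes p :: nat and u :: 'a
  assumes finG: "finite (carrier G)"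
    and p_prime: "prime p"
    and u_in: "u \<in> carrier G" and u_p: "u [^] p = \<one>" and u_ne: "u \<noteq> \<one>"
begin

abbreviation "ip \<equiv> ipS (carrier G)"
abbreviation "nr \<equiv> nrS (carrier G)"

lemma p_pos: "p > 0" using p_prime prime_gt_0_nat by blast

lemma R_bij: "g \<in> carrier G \<Longrightarrow> bij_betw (\<lambda>x. x \<otimes> g) (carrier G) (carrier G)"
  by (rule bij_betwI[where g = "\<lambda>x. x \<otimes> inv g"]) (auto simp: m_assoc)

lemma R_ip: "g \<in> carrier G \<Longrightarrow> ip (Rt G g f) (Rt G g h) = ip f h"
  unfolding ipS_def Rt_def
  using sum.reindex_bij_betw[OF R_bij, of g "\<lambda>x. f x * cnj (h x)"] by simp

lemma R_nr: "g \<in> carrier G \<Longrightarrow> nr (Rt G g f) = nr f"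
  using R_ip[of g f f] by (metis nrS_ip of_real_eq_iff)

lemma R_ms: "g \<in> carrier G \<Longrightarrow> ms G (Rt G g f) = ms G f"
  unfolding ms_def Rt_def
  using sum.reindex_bij_betw[OF R_bij, of g f] by simp

lemma R_comp: "x \<in> carrier G \<Longrightarrow> g \<in> carrier G \<Longrightarrow> h \<in> carrier G \<Longrightarrow> Rt G g (Rt G h f) x = Rt G (g \<otimes> h) f x"
  unfolding Rt_def by (simp add: m_assoc)

lemma Eig_pow: assumes "Eig G u z v" "x \<in> carrier G" shows "v (x \<otimes> u [^] (k::nat)) = z ^ k * v x"
proof (induction k)
  case 0 then show ?case using assms(2) by simp
next
  case (Suc k)
  have "v (x \<otimes> u [^] Suc k) = v ((x \<otimes> u [^] k) \<otimes> u)" using assms(2) u_in by (simp add: m_assoc)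
  also have "\<dots> = z * v (x \<otimes> u [^] k)" using assms u_in unfolding Eig_def by simp
  finally show ?case using Suc by simp
qed

lemma Pj_eig: "Eig G u (omg p ^ j) (Pj G p u j f)"
  unfolding Eig_def
proof
  fix x assume x: "x \<in> carrier G"
  define h where "h k = omg p ^ j * (cnj (omg p) ^ (j * k) * f (x \<otimes> u [^] k))" for k
  have hp: "h p = h 0"
  proof -
    have "cnj (omg p) ^ (j * p) = 1" using omg_p[OF p_pos] by (simp flip: complex_cnj_power add: power_mult mult.commute[of j])
    then show ?thesis unfolding h_def using u_p x by simp
  qed
  have "Pj G p u j f (x \<otimes> u) = (\<Sum>k<p. h (Suc k))"
    unfolding Pj_def
  proof (rule sum.cong[OF refl])
    fix k assume "k \<in> {..<p}"
    have e: "x \<otimes> u \<otimes> u [^] k = x \<otimes> u [^] Suc k" using x u_in by (metis m_assoc nat_pow_Suc2 nat_pow_closed)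
    have c: "omg p ^ j * cnj (omg p) ^ (j * Suc k) = cnj (omg p) ^ (j * k)"
    proof -
      have 1: "cnj (omg p) ^ (j * Suc k) = cnj (omg p ^ j) * cnj (omg p) ^ (j * k)"
        by (simp add: power_add complex_cnj_power)
      have "omg p ^ j * cnj (omg p) ^ (j * Suc k) = (cnj (omg p ^ j) * omg p ^ j) * cnj (omg p) ^ (j * k)"
        unfolding 1 by (simp only: ac_simps)
      then show ?thesis by (simp only: omg_cnj_mult mult.left_neutral)
    qed
    show "cnj (omg p) ^ (j * k) * f (x \<otimes> u \<otimes> u [^] k) = h (Suc k)"
      unfolding h_def e using c by (simp add: mult.assoc[symmetric])
  qed
  also have "\<dots> = (\<Sum>k<p. h k)" by (rule sum_cyclic_shift[OF hp])
  also have "\<dots> = omg p ^ j * Pj G p u j f x" unfolding h_def Pj_def by (simp add: sum_distrib_left)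
  finally show "Pj G p u j f (x \<otimes> u) = omg p ^ j * Pj G p u j f x" .
qed

lemma geom_roots: "k < p \<Longrightarrow> (\<Sum>j<p. cnj (omg p) ^ (j * k)) = (if k = 0 then of_nat p else 0)"
proof -
  assume k: "k < p"
  show ?thesis
  proof (cases "k = 0")
    case True then show ?thesis by simp
  next
    case False
    define z where "z = cnj (omg p) ^ k"
    have z1: "z \<noteq> 1"
    proof
      assume "z = 1"
      then have "omg p ^ k = 1" unfolding z_def by (metis complex_cnj_one complex_cnj_cnj complex_cnj_power)
      then have "p dvd k" using omg_pow_eq1 p_pos by blast
      with k False show False by (simp add: nat_dvd_not_less)
    qed
    have zp: "z ^ p = 1" unfolding z_def using omg_p[OF p_pos]
      by (simp flip: complex_cnj_power power_mult add: mult.commute[of k] power_mult)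
    have "(\<Sum>j<p. cnj (omg p) ^ (j * k)) = (\<Sum>j<p. z ^ j)" unfolding z_def by (intro sum.cong refl) (metis power_mult mult.commute)
    also have "\<dots> = 0" using geometric_sum[OF z1, of p] zp by simp
    finally show ?thesis using False by simp
  qed
qed

lemma Pj_sum: assumes x: "x \<in> carrier G" shows "(\<Sum>j<p. Pj G p u j f x) = of_nat p * f x"
proof -
  have "(\<Sum>j<p. Pj G p u j f x) = (\<Sum>j<p. \<Sum>k<p. cnj (omg p) ^ (j * k) * f (x \<otimes> u [^] k))"
    unfolding Pj_def by simp
  also have "\<dots> = (\<Sum>k<p. \<Sum>j<p. cnj (omg p) ^ (j * k) * f (x \<otimes> u [^] k))"
    by (rule sum.swap)
  also have "\<dots> = (\<Sum>k<p. (\<Sum>j<p. cnj (omg p) ^ (j * k)) * f (x \<otimes> u [^] k))"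
    by (simp add: sum_distrib_right)
  also have "\<dots> = (\<Sum>k<p. (if k = 0 then of_nat p * f x else 0))"
    by (rule sum.cong[OF refl]) (simp add: geom_roots x)
  also have "\<dots> = of_nat p * f x" using p_pos by (simp add: sum.delta)
  finally show ?thesis .
qed

lemma Pj_ms: "ms G f = 0 \<Longrightarrow> ms G (Pj G p u j f) = 0"
proof -
  assume "ms G f = 0"
  have "ms G (Pj G p u j f) = (\<Sum>k<p. cnj (omg p) ^ (j * k) * ms G (Rt G (u [^] k) f))"
    unfolding ms_def Pj_def Rt_def by (simp add: sum.swap[of _ "carrier G"] sum_distrib_left)
  also have "\<dots> = 0" using R_ms \<open>ms G f = 0\<close> u_in by simp
  finally show ?thesis .
qed

lemma eig_orth:
  assumes "Eig G u (omg p ^ s) v" "Eig G u (omg p ^ t) w" "\<not> [s = t] (mod p)"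
  shows "ip v w = 0"
proof -
  have "ip v w = ip (Rt G u v) (Rt G u w)" using R_ip u_in by simp
  also have "\<dots> = ip (\<lambda>x. omg p ^ s * v x) (\<lambda>x. omg p ^ t * w x)"
    using assms(1,2) unfolding Eig_def Rt_def by (intro ipS_cong) auto
  also have "\<dots> = (omg p ^ s * cnj (omg p ^ t)) * ip v w"
    by (simp add: ipS_scale_left ipS_scale_right)
  finally have e: "(1 - omg p ^ s * cnj (omg p ^ t)) * ip v w = 0" by (simp add: algebra_simps)
  have "omg p ^ s * cnj (omg p ^ t) \<noteq> 1"
  proof
    assume a: "omg p ^ s * cnj (omg p ^ t) = 1"
    have "omg p ^ s = omg p ^ s * (cnj (omg p ^ t) * omg p ^ t)" using omg_cnj_mult[of p t] by simp
    also have "\<dots> = (omg p ^ s * cnj (omg p ^ t)) * omg p ^ t" by (simp only: mult.assoc)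
    also have "\<dots> = omg p ^ t" by (simp only: a mult.left_neutral)
    finally have "omg p ^ s = omg p ^ t" .
    then show False using omg_pow_inj[OF p_pos] assms(3) by blast
  qed
  then show ?thesis using e by simp
qed

end

locale qrm = qr +
  fixes m :: nat and a :: "nat \<Rightarrow> 'a"
  assumes a_in: "\<And>i. i \<in> {1..m} \<Longrightarrow> a i \<in> carrier G" and a_inj: "inj_on a {1..m}"
begin

abbreviation "T \<equiv> Tc G m a"

lemma T_cong: "(\<And>x. x \<in> carrier G \<Longrightarrow> f x = f' x) \<Longrightarrow> y \<in> carrier G \<Longrightarrow> T f y = T f' y"
  unfolding Tc_def using a_in by (intro sum.cong) auto

lemma T_R: "g \<in> carrier G \<Longrightarrow> y \<in> carrier G \<Longrightarrow> T (Rt G g f) y = Rt G g (T f) y"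
  unfolding Tc_def Rt_def using a_in by (intro sum.cong) (auto simp: m_assoc)

lemma T_scale: "T (\<lambda>x. c * f x) y = c * T f y"
  unfolding Tc_def by (simp add: sum_distrib_left)

lemma T_sum: "T (\<lambda>x. \<Sum>j\<in>J. v j x) y = (\<Sum>j\<in>J. T (v j) y)"
  unfolding Tc_def by (rule sum.swap)

lemma T_diff: "T (\<lambda>x. f x - g x) y = T f y - T g y"
  unfolding Tc_def by (simp add: sum_subtractf)

lemma T_const: "T (\<lambda>x. c) y = of_nat m * c"
  unfolding Tc_def by simp

lemma T_Eig: assumes "Eig G u z v" shows "Eig G u z (T v)"
  unfolding Eig_def
proof
  fix x assume x: "x \<in> carrier G"
  have "T v (x \<otimes> u) = Rt G u (T v) x" unfolding Rt_def by simp
  also have "\<dots> = T (Rt G u v) x" using T_R[OF u_in x] by simp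
  also have "\<dots> = T (\<lambda>y. z * v y) x"
    using assms x unfolding Eig_def Rt_def by (intro T_cong) auto
  also have "\<dots> = z * T v x" by (rule T_scale)
  finally show "T v (x \<otimes> u) = z * T v x" .
qed

lemma T_nr_zero: assumes "nr f = 0" shows "nr (T f) = 0"
proof -
  have "T f y = T (\<lambda>x. 0) y" if "y \<in> carrier G" for y
    using nrS_zero[OF finG assms] that by (intro T_cong) auto
  then show ?thesis unfolding nrS_def by (simp add: Tc_def)
qed

lemma nr_scale: "nr (\<lambda>x. c * f x) = (cmod c)^2 * nr f"
  unfolding nrS_def by (simp add: sum_distrib_left norm_mult power_mult_distrib)

definition ky :: "'a \<Rightarrow> 'a \<Rightarrow> complex" where
  "ky y x = (if x \<in> (\<lambda>i. inv (a i) \<otimes> y) ` {1..m} then 1 else 0)"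

lemma ky_inj: "y \<in> carrier G \<Longrightarrow> inj_on (\<lambda>i. inv (a i) \<otimes> y) {1..m}"
proof (rule inj_onI)
  fix i j assume y: "y \<in> carrier G" and ij: "i \<in> {1..m}" "j \<in> {1..m}" "inv (a i) \<otimes> y = inv (a j) \<otimes> y"
  then have "inv (a i) = inv (a j)" using a_in by (meson inv_closed right_cancel)
  then have "a i = a j" using a_in ij by (metis inv_inv)
  then show "i = j" using a_inj ij by (meson inj_onD)
qed

lemma ky_sub: "y \<in> carrier G \<Longrightarrow> (\<lambda>i. inv (a i) \<otimes> y) ` {1..m} \<subseteq> carrier G"
  using a_in by auto

lemma T_ky: assumes y: "y \<in> carrier G" shows "T v y = ip v (ky y)"
proof -
  let ?X = "(\<lambda>i. inv (a i) \<otimes> y) ` {1..m}"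
  have "ip v (ky y) = (\<Sum>x\<in>carrier G. if x \<in> ?X then v x else 0)"
    unfolding ipS_def ky_def by (intro sum.cong) auto
  also have "\<dots> = (\<Sum>x\<in>carrier G \<inter> ?X. v x)" by (rule sum.inter_restrict[OF finG, symmetric])
  also have "carrier G \<inter> ?X = ?X" using ky_sub[OF y] by blast
  also have "(\<Sum>x\<in>?X. v x) = T v y" unfolding Tc_def by (subst sum.reindex[OF ky_inj[OF y]]) simp
  finally show ?thesis by simp
qed

lemma nr_ky: assumes y: "y \<in> carrier G" shows "nr (ky y) = real m"
proof -
  let ?X = "(\<lambda>i. inv (a i) \<otimes> y) ` {1..m}"
  have "nr (ky y) = (\<Sum>x\<in>carrier G. if x \<in> ?X then 1 else 0)"
    unfolding nrS_def ky_def by (intro sum.cong) auto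
  also have "\<dots> = real (card (carrier G \<inter> ?X))" using finG by (simp add: sum.If_cases)
  also have "carrier G \<inter> ?X = ?X" using ky_sub[OF y] by blast
  also have "card ?X = m" using card_image[OF ky_inj[OF y]] by simp
  finally show ?thesis .
qed

lemma card_ge2: "card (carrier G) \<ge> 2"
proof -
  have "{\<one>, u} \<subseteq> carrier G" using u_in by auto
  then have "card {\<one>, u} \<le> card (carrier G)" using finG card_mono by blast
  then show ?thesis using u_ne by simp
qed

lemma maximizer:
  obtains f0 lam where "ms G f0 = 0" "nr f0 = 1" "nr (T f0) = lam"
    "\<And>f. ms G f = 0 \<Longrightarrow> nr (T f) \<le> lam * nr f"
proof -
  define K :: "('a \<Rightarrow> complex) set" where "K = PiE UNIV (\<lambda>x. if x \<in> carrier G then cball 0 1 else {0})"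
  have cK: "compact K"
  proof -
    have "compactin (product_topology (\<lambda>i. euclidean) UNIV) K"
      unfolding K_def by (subst compactin_PiE) (auto simp: compactin_euclidean_iff)
    then show ?thesis by (simp add: euclidean_product_topology compactin_euclidean_iff)
  qed
  have c_ms: "continuous_on UNIV (\<lambda>f::'a\<Rightarrow>complex. ms G f)"
    unfolding ms_def by (intro continuous_intros continuous_on_product_coordinates)
  have c_nr: "continuous_on UNIV (\<lambda>f::'a\<Rightarrow>complex. nr f)"
    unfolding nrS_def by (intro continuous_intros continuous_on_product_coordinates)
  have c_nrT: "continuous_on UNIV (\<lambda>f::'a\<Rightarrow>complex. nr (T f))"
    unfolding nrS_def Tc_def by (intro continuous_intros continuous_on_product_coordinates)
  define S where "S = K \<inter> {f. ms G f = 0} \<inter> {f. nr f = 1}"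
  have cS: "compact S" unfolding S_def
    by (intro compact_Int_closed cK closed_Collect_eq c_ms c_nr continuous_on_const)
  obtain x1 x2 where x12: "x1 \<in> carrier G" "x2 \<in> carrier G" "x1 \<noteq> x2" using u_in u_ne by blast
  define g0 :: "'a \<Rightarrow> complex" where
    "g0 x = (if x = x1 then 1 / sqrt 2 else if x = x2 then - 1 / sqrt 2 else 0)" for x
  have "g0 \<in> S"
  proof -
    have "g0 \<in> K" unfolding K_def g0_def using x12 by (auto simp: PiE_iff)
    moreover have "ms G g0 = 0"
    proof -
      have "ms G g0 = (\<Sum>x\<in>{x1, x2}. g0 x)" unfolding ms_def
        by (rule sum.mono_neutral_right) (use finG x12 in \<open>auto simp: g0_def\<close>)
      then show ?thesis using x12 by (simp add: g0_def)
    qed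
    moreover have "nr g0 = 1"
    proof -
      have "nr g0 = (\<Sum>x\<in>{x1, x2}. (cmod (g0 x))^2)" unfolding nrS_def
        by (rule sum.mono_neutral_right) (use finG x12 in \<open>auto simp: g0_def\<close>)
      then show ?thesis using x12 by (simp add: g0_def power_divide norm_divide)
    qed
    ultimately show ?thesis unfolding S_def by simp
  qed
  then have Sne: "(\<lambda>f. nr (T f)) ` S \<noteq> {}" by blast
  have "compact ((\<lambda>f. nr (T f)) ` S)"
    by (rule compact_continuous_image[OF continuous_on_subset[OF c_nrT] cS]) simp
  from compact_attains_sup[OF this Sne] obtain f0 where f0: "f0 \<in> S" "\<And>f. f \<in> S \<Longrightarrow> nr (T f) \<le> nr (T f0)"
    by auto
  show ?thesis
  proof (rule that[of f0 "nr (T f0)"])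
    show "ms G f0 = 0" "nr f0 = 1" using f0(1) unfolding S_def by auto
    show "nr (T f0) = nr (T f0)" ..
    fix f assume mf: "ms G f = 0"
    show "nr (T f) \<le> nr (T f0) * nr f"
    proof (cases "nr f = 0")
      case True then show ?thesis using T_nr_zero by simp
    next
      case False
      then have pos: "nr f > 0" using nrS_nonneg[of "carrier G" f] by simp
      define c :: complex where "c = of_real (1 / sqrt (nr f))"
      define f' where "f' x = (if x \<in> carrier G then c * f x else 0)" for x
      have cc: "(cmod c)^2 * nr f = 1" unfolding c_def using pos
        by (simp add: power_divide norm_divide)
      have nf': "nr f' = 1"
      proof -
        have "nr f' = nr (\<lambda>x. c * f x)" unfolding f'_def by (intro nrS_cong) simp
        then show ?thesis using cc nr_scale by simp
      qed
      have "f' \<in> S"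
      proof -
        have "cmod (f' x) \<le> 1" if "x \<in> carrier G" for x
        proof -
          have "(cmod (f' x))^2 \<le> nr f'" unfolding nrS_def
            by (rule member_le_sum) (use that finG in auto)
          then have "(cmod (f' x))^2 \<le> 1^2" using nf' by simp
          then show ?thesis by (rule power2_le_imp_le) simp
        qed
        then have "f' \<in> K" unfolding K_def by (auto simp: PiE_iff f'_def)
        moreover have "ms G f' = 0"
        proof -
          have "ms G f' = (\<Sum>x\<in>carrier G. c * f x)" unfolding ms_def f'_def by simp
          also have "\<dots> = c * ms G f" unfolding ms_def by (simp add: sum_distrib_left)
          finally show ?thesis using mf by simp
        qed
        ultimately show ?thesis using nf' unfolding S_def by simp
      qed
      then have le: "nr (T f') \<le> nr (T f0)" by (rule f0(2))
      have "nr (T f') = nr (\<lambda>y. c * T f y)"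
      proof (rule nrS_cong)
        fix y assume y: "y \<in> carrier G"
        have "T f' y = T (\<lambda>x. c * f x) y" by (rule T_cong[OF _ y]) (simp add: f'_def)
        then show "T f' y = c * T f y" by (simp add: T_scale)
      qed
      also have "\<dots> = (cmod c)^2 * nr (T f)" by (rule nr_scale)
      finally have "(cmod c)^2 * nr (T f) \<le> nr (T f0)" using le by simp
      then have "((cmod c)^2 * nr (T f)) * nr f \<le> nr (T f0) * nr f"
        using pos by (intro mult_right_mono) auto
      moreover have "((cmod c)^2 * nr (T f)) * nr f = ((cmod c)^2 * nr f) * nr (T f)" by (simp only: ac_simps)
      ultimately show ?thesis using cc by simp
    qed
  qed
qed

end

locale qrs = qrm +
  fixes I :: "nat set" and d :: "nat \<Rightarrow> 'a" and e :: "nat \<Rightarrow> nat"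
  assumes I_fin: "finite I"
    and d_in: "\<And>i. i \<in> I \<Longrightarrow> d i \<in> carrier G"
    and d_conj: "\<And>i. i \<in> I \<Longrightarrow> inv (d i) \<otimes> u \<otimes> d i = u [^] e i"
    and e_dist: "\<And>i i'. i \<in> I \<Longrightarrow> i' \<in> I \<Longrightarrow> [e i = e i'] (mod p) \<Longrightarrow> i = i'"
    and gen: "\<And>(f :: 'a \<Rightarrow> complex) x. (\<And>y g. y \<in> carrier G \<Longrightarrow> g \<in> carrier G \<Longrightarrow> f (y \<otimes> (inv g \<otimes> u \<otimes> g)) = f y)
                \<Longrightarrow> x \<in> carrier G \<Longrightarrow> f x = f \<one>"
begin

lemma spectral: assumes "ms G f = 0" shows "nr (T f) * real (card I) \<le> real m * real (card (carrier G)) * nr f"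
proof -
  obtain f0 lam where f0: "ms G f0 = 0" "nr f0 = 1" "nr (T f0) = lam"
    and maxi: "\<And>f. ms G f = 0 \<Longrightarrow> nr (T f) \<le> lam * nr f"
    using maximizer by blast
  define Ext where "Ext f \<longleftrightarrow> ms G f = 0 \<and> nr (T f) = lam * nr f" for f
  have lam0: "lam \<ge> 0" using f0(3) nrS_nonneg by metis
  have Ext0: "Ext f0" unfolding Ext_def using f0 by simp
  have Ext_R: "Ext (Rt G g f)" if "Ext f" "g \<in> carrier G" for f g
  proof -
    have "nr (T (Rt G g f)) = nr (Rt G g (T f))"
      by (rule nrS_cong) (use T_R that(2) in auto)
    then show ?thesis using that R_ms R_nr unfolding Ext_def by simp
  qed
  have Ext_P: "Ext (Pj G p u j f)" if "Ext f" "j < p" for f j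
  proof -
    define v where "v j = Pj G p u j f" for j
    have ms_v: "ms G (v j) = 0" for j unfolding v_def using Pj_ms that unfolding Ext_def by blast
    have ncong: "\<not> [i = j] (mod p)" if "i \<in> {..<p}" "j \<in> {..<p}" "i \<noteq> j" for i j
      using that cong_less_modulus_unique_nat by auto
    have orth: "ip (v i) (v j) = 0" if "i \<in> {..<p}" "j \<in> {..<p}" "i \<noteq> j" for i j
      unfolding v_def by (rule eig_orth[OF Pj_eig Pj_eig ncong[OF that]])
    have orthT: "ip (T (v i)) (T (v j)) = 0" if "i \<in> {..<p}" "j \<in> {..<p}" "i \<noteq> j" for i j
      unfolding v_def by (rule eig_orth[OF T_Eig[OF Pj_eig] T_Eig[OF Pj_eig] ncong[OF that]])
    have e1: "(real p)^2 * nr f = (\<Sum>j<p. nr (v j))"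
    proof -
      have "nr (\<lambda>x. \<Sum>j<p. v j x) = nr (\<lambda>x. of_nat p * f x)"
        unfolding v_def by (rule nrS_cong) (rule Pj_sum)
      also have "\<dots> = (real p)^2 * nr f" by (simp add: nr_scale)
      finally show ?thesis using pythagoras[of "{..<p}" "carrier G" v] orth by simp
    qed
    have e2: "(real p)^2 * nr (T f) = (\<Sum>j<p. nr (T (v j)))"
    proof -
      have "nr (\<lambda>y. \<Sum>j<p. T (v j) y) = nr (\<lambda>y. of_nat p * T f y)"
      proof (rule nrS_cong)
        fix y assume y: "y \<in> carrier G"
        have "(\<Sum>j<p. T (v j) y) = T (\<lambda>x. \<Sum>j<p. v j x) y" by (simp add: T_sum)
        also have "\<dots> = T (\<lambda>x. of_nat p * f x) y" unfolding v_def by (rule T_cong[OF _ y]) (rule Pj_sum)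
        also have "\<dots> = of_nat p * T f y" by (rule T_scale)
        finally show "(\<Sum>j<p. T (v j) y) = of_nat p * T f y" .
      qed
      also have "\<dots> = (real p)^2 * nr (T f)" by (simp add: nr_scale)
      finally show ?thesis using pythagoras[of "{..<p}" "carrier G" "\<lambda>j. T (v j)"] orthT by simp
    qed
    have le: "nr (T (v j)) \<le> lam * nr (v j)" for j using maxi ms_v by blast
    have "(\<Sum>j<p. lam * nr (v j) - nr (T (v j))) = lam * ((real p)^2 * nr f) - (real p)^2 * nr (T f)"
      by (simp add: e1 e2 sum_subtractf sum_distrib_left)
    also have "\<dots> = 0" using that unfolding Ext_def by simp
    finally have "(\<Sum>j<p. lam * nr (v j) - nr (T (v j))) = 0" .
    then have "\<forall>j\<in>{..<p}. lam * nr (v j) - nr (T (v j)) = 0"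
      by (subst (asm) sum_nonneg_eq_0_iff) (use le in auto)
    then show ?thesis unfolding Ext_def v_def using ms_v v_def \<open>j < p\<close> by auto
  qed
  have nontriv: "\<exists>g\<in>carrier G. \<exists>j. 0 < j \<and> j < p \<and> (\<exists>x\<in>carrier G. Pj G p u j (Rt G g f0) x \<noteq> 0)"
  proof (rule ccontr)
    assume "\<not> ?thesis"
    then have z: "Pj G p u j (Rt G g f0) x = 0" if "g \<in> carrier G" "0 < j" "j < p" "x \<in> carrier G" for g j x
      using that by blast
    have P0: "of_nat p * f0 (x \<otimes> g) = Pj G p u 0 (Rt G g f0) x" if "g \<in> carrier G" "x \<in> carrier G" for g x
    proof -
      have "of_nat p * f0 (x \<otimes> g) = (\<Sum>j<p. Pj G p u j (Rt G g f0) x)"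
        using Pj_sum[OF that(2), of "Rt G g f0"] by (simp add: Rt_def)
      also have "\<dots> = (\<Sum>j\<in>{0}. Pj G p u j (Rt G g f0) x)"
        by (rule sum.mono_neutral_right) (use z that p_pos in auto)
      finally show ?thesis by simp
    qed
    have inv_u: "f0 (x \<otimes> u \<otimes> g) = f0 (x \<otimes> g)" if "g \<in> carrier G" "x \<in> carrier G" for g x
    proof -
      have "of_nat p * f0 (x \<otimes> u \<otimes> g) = Pj G p u 0 (Rt G g f0) (x \<otimes> u)"
        using P0[OF that(1)] that u_in by simp
      also have "\<dots> = Pj G p u 0 (Rt G g f0) x"
        using Pj_eig[of 0 "Rt G g f0"] that unfolding Eig_def by simp
      also have "\<dots> = of_nat p * f0 (x \<otimes> g)" using P0 that by simp
      finally show ?thesis using p_pos by simp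
    qed
    have const: "f0 x = f0 \<one>" if "x \<in> carrier G" for x
    proof (rule gen[where f = f0, OF _ that])
      fix y g assume yg: "y \<in> carrier G" "g \<in> carrier G"
      have "y \<otimes> (inv g \<otimes> u \<otimes> g) = (y \<otimes> inv g) \<otimes> u \<otimes> g" using yg u_in by (simp add: m_assoc)
      then have "f0 (y \<otimes> (inv g \<otimes> u \<otimes> g)) = f0 ((y \<otimes> inv g) \<otimes> g)"
        using inv_u[of g "y \<otimes> inv g"] yg by simp
      also have "(y \<otimes> inv g) \<otimes> g = y" using yg by (simp add: m_assoc)
      finally show "f0 (y \<otimes> (inv g \<otimes> u \<otimes> g)) = f0 y" .
    qed
    have "ms G f0 = (\<Sum>x\<in>carrier G. f0 \<one>)" unfolding ms_def by (rule sum.cong[OF refl]) (rule const)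
    then have "ms G f0 = of_nat (card (carrier G)) * f0 \<one>" by simp
    then have f1: "f0 \<one> = 0" using f0(1) card_ge2 by simp
    have "nr f0 = (\<Sum>x\<in>carrier G. (cmod (f0 \<one>))^2)" unfolding nrS_def
      by (rule sum.cong[OF refl]) (simp only: const)
    then have "nr f0 = 0" using f1 by simp
    then show False using f0(2) by simp
  qed
  then obtain g j x0 where gj: "g \<in> carrier G" "0 < j" "j < p" "x0 \<in> carrier G" "Pj G p u j (Rt G g f0) x0 \<noteq> 0"
    by blast
  define h where "h = Pj G p u j (Rt G g f0)"
  have Exth: "Ext h" unfolding h_def by (rule Ext_P[OF Ext_R[OF Ext0 gj(1)] gj(3)])
  have Eigh: "Eig G u (omg p ^ j) h" unfolding h_def by (rule Pj_eig)
  have nrh: "nr h > 0"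
  proof -
    have "nr h \<noteq> 0" using nrS_zero[OF finG, of h x0] gj(4,5) unfolding h_def by blast
    then show ?thesis using nrS_nonneg[of "carrier G" h] by simp
  qed
  define v where "v i = Rt G (d i) h" for i
  have Extv: "Ext (v i)" if "i \<in> I" for i unfolding v_def by (rule Ext_R[OF Exth d_in[OF that]])
  have nrv: "nr (v i) = nr h" if "i \<in> I" for i unfolding v_def by (rule R_nr[OF d_in[OF that]])
  have Eigv: "Eig G u (omg p ^ (j * e i)) (v i)" if "i \<in> I" for i
    unfolding Eig_def
  proof
    fix x assume x: "x \<in> carrier G"
    have di: "d i \<in> carrier G" using d_in[OF that] .
    have "x \<otimes> u \<otimes> d i = (x \<otimes> d i) \<otimes> (inv (d i) \<otimes> u \<otimes> d i)"
    proof -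
      have "d i \<otimes> (inv (d i) \<otimes> (u \<otimes> d i)) = u \<otimes> d i"
        using di u_in by (metis m_assoc inv_closed m_closed r_inv l_one)
      then show ?thesis using x di u_in by (simp add: m_assoc)
    qed
    also have "\<dots> = (x \<otimes> d i) \<otimes> u [^] e i" using d_conj[OF that] by simp
    finally have "v i (x \<otimes> u) = h ((x \<otimes> d i) \<otimes> u [^] e i)" unfolding v_def Rt_def by simp
    also have "\<dots> = (omg p ^ j) ^ e i * h (x \<otimes> d i)" by (rule Eig_pow[OF Eigh]) (use x di in simp)
    finally show "v i (x \<otimes> u) = omg p ^ (j * e i) * v i x" unfolding v_def Rt_def by (simp add: power_mult)
  qed
  have cop: "coprime j p"
  proof -
    have "\<not> p dvd j" using gj(2,3) by (simp add: nat_dvd_not_less)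
    then show ?thesis using prime_imp_coprime_nat[OF p_prime] by (simp add: coprime_commute)
  qed
  have orthv: "ip (v i) (v i') = 0" if "i \<in> I" "i' \<in> I" "i \<noteq> i'" for i i'
  proof (rule eig_orth[OF Eigv[OF that(1)] Eigv[OF that(2)]])
    show "\<not> [j * e i = j * e i'] (mod p)"
      using cong_mult_lcancel_nat[OF cop] e_dist that by blast
  qed
  have bes: "(\<Sum>i\<in>I. (cmod (T (v i) y))^2 / nr (v i)) \<le> real m" if y: "y \<in> carrier G" for y
  proof -
    have "(\<Sum>i\<in>I. (cmod (ip (v i) (ky y)))^2 / nr (v i)) \<le> nr (ky y)"
      by (rule bessel[OF I_fin orthv]) (use nrv nrh in auto)
    then show ?thesis using T_ky[OF y] nr_ky[OF y] by simp
  qed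
  have "real (card I) * lam = (\<Sum>i\<in>I. nr (T (v i)) / nr (v i))"
  proof -
    have "(\<Sum>i\<in>I. nr (T (v i)) / nr (v i)) = (\<Sum>i\<in>I. lam)"
    proof (rule sum.cong[OF refl])
      fix i assume i: "i \<in> I"
      have "nr (T (v i)) = lam * nr (v i)" using Extv[OF i] unfolding Ext_def by simp
      then show "nr (T (v i)) / nr (v i) = lam" using nrv[OF i] nrh by simp
    qed
    then show ?thesis by simp
  qed
  also have "\<dots> = (\<Sum>i\<in>I. \<Sum>y\<in>carrier G. (cmod (T (v i) y))^2 / nr (v i))"
    unfolding nrS_def by (simp add: sum_divide_distrib)
  also have "\<dots> = (\<Sum>y\<in>carrier G. \<Sum>i\<in>I. (cmod (T (v i) y))^2 / nr (v i))"
    by (rule sum.swap)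
  also have "\<dots> \<le> (\<Sum>y\<in>carrier G. real m)" by (rule sum_mono) (rule bes)
  also have "\<dots> = real m * real (card (carrier G))" by simp
  finally have lamb: "real (card I) * lam \<le> real m * real (card (carrier G))" .
  have "nr (T f) * real (card I) \<le> (lam * nr f) * real (card I)"
    using maxi[OF assms] by (intro mult_right_mono) auto
  also have "\<dots> = (real (card I) * lam) * nr f" by simp
  also have "\<dots> \<le> (real m * real (card (carrier G))) * nr f"
    using lamb nrS_nonneg by (intro mult_right_mono) auto
  finally show ?thesis .
qed

end

lemma (in group) abc_one: "a \<in> carrier G \<Longrightarrow> b \<in> carrier G \<Longrightarrow> c \<in> carrier G \<Longrightarrow>
   a \<otimes> b \<otimes> c = \<one> \<longleftrightarrow> b = inv a \<otimes> inv c"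
proof -
  assume abc: "a \<in> carrier G" "b \<in> carrier G" "c \<in> carrier G"
  have 1: "a \<otimes> b \<otimes> c = \<one> \<longleftrightarrow> a \<otimes> b = inv c"
  proof
    assume "a \<otimes> b \<otimes> c = \<one>"
    then have "inv c = a \<otimes> b" using abc by (intro inv_equality) auto
    then show "a \<otimes> b = inv c" by simp
  next
    assume "a \<otimes> b = inv c"
    then show "a \<otimes> b \<otimes> c = \<one>" using abc by simp
  qed
  have 2: "b = inv a \<otimes> inv c \<longleftrightarrow> inv c = a \<otimes> b" using abc by (intro inv_solve_left) auto
  show ?thesis using 1 2 by auto
qed

lemma cs_complex: "finite L \<Longrightarrow> cmod (\<Sum>l\<in>L. z l) \<le> sqrt (real (card L) * (\<Sum>l\<in>L. (cmod (z l))^2))"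
proof -
  assume fin: "finite L"
  have "cmod (\<Sum>l\<in>L. z l) \<le> (\<Sum>l\<in>L. cmod (z l))" by (rule norm_sum)
  moreover have "(\<Sum>l\<in>L. 1 * cmod (z l))^2 \<le> (\<Sum>l\<in>L. 1^2) * (\<Sum>l\<in>L. (cmod (z l))^2)"
    by (rule Cauchy_Schwarz_ineq_sum)
  then have "(\<Sum>l\<in>L. cmod (z l)) \<le> sqrt (real (card L) * (\<Sum>l\<in>L. (cmod (z l))^2))"
    by (intro real_le_rsqrt) simp
  ultimately show ?thesis by linarith
qed

context qrs begin

lemma counting:
  assumes b_in: "\<And>i. i \<in> {1..m} \<Longrightarrow> b i \<in> carrier G"
    and c_in: "\<And>i. i \<in> {1..m} \<Longrightarrow> c i \<in> carrier G"
    and match: "\<And>i j l. i \<in> {1..m} \<Longrightarrow> j \<in> {1..m} \<Longrightarrow> l \<in> {1..m} \<Longrightarrow>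
                  (a i \<otimes> b j \<otimes> c l = \<one> \<longleftrightarrow> i = j \<and> j = l)"
    and Ipos: "card I > 0"
  shows "real m ^ 3 / real (card (carrier G)) \<le> real m + sqrt (real m ^ 3 * real (card (carrier G)) / real (card I))"
proof -
  define n where "n = card (carrier G)"
  have npos: "n > 0" unfolding n_def using card_ge2 by simp
  have b_inj: "inj_on b {1..m}"
  proof (rule inj_onI)
    fix i j assume ij: "i \<in> {1..m}" "j \<in> {1..m}" "b i = b j"
    have "a i \<otimes> b i \<otimes> c i = \<one>" using match ij by blast
    then have "a i \<otimes> b j \<otimes> c i = \<one>" using ij by simp
    then show "i = j" using match ij by blast
  qed
  have c_inj: "inj_on c {1..m}"
  proof (rule inj_onI)
    fix i j assume ij: "i \<in> {1..m}" "j \<in> {1..m}" "c i = c j"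
    have "a i \<otimes> b i \<otimes> c i = \<one>" using match ij by blast
    then have "a i \<otimes> b i \<otimes> c j = \<one>" using ij by simp
    then show "i = j" using match ij by blast
  qed
  define B where "B = b ` {1..m}"
  have B_sub: "B \<subseteq> carrier G" unfolding B_def using b_in by auto
  have cardB: "card B = m" unfolding B_def using card_image[OF b_inj] by simp
  define cst :: real where "cst = real m / real n"
  define br :: "'a \<Rightarrow> real" where "br x = (if x \<in> B then 1 else 0)" for x
  define hh :: "'a \<Rightarrow> complex" where "hh x = complex_of_real (br x - cst)" for x
  have sum_br: "(\<Sum>x\<in>carrier G. br x) = real m"
  proof -
    have "(\<Sum>x\<in>carrier G. br x) = real (card (carrier G \<inter> B))"
      unfolding br_def using finG by (simp add: sum.If_cases)
    also have "carrier G \<inter> B = B" using B_sub by blast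
    finally show ?thesis using cardB by simp
  qed
  have ms_hh: "ms G hh = 0"
  proof -
    have "ms G hh = complex_of_real (\<Sum>x\<in>carrier G. br x - cst)" unfolding ms_def hh_def by simp
    also have "(\<Sum>x\<in>carrier G. br x - cst) = real m - real n * cst"
      by (simp add: sum_subtractf sum_br n_def)
    also have "\<dots> = 0" unfolding cst_def using npos by simp
    finally show ?thesis by simp
  qed
  have nr_hh: "nr hh \<le> real m"
  proof -
    have br2: "(br x)^2 = br x" for x unfolding br_def by simp
    have "nr hh = (\<Sum>x\<in>carrier G. (br x)^2 - 2 * cst * br x + cst^2)"
      unfolding nrS_def hh_def norm_of_real power2_abs by (intro sum.cong refl) (simp add: power2_diff)
    also have "\<dots> = real m - 2 * cst * real m + real n * cst^2"
      by (simp add: br2 sum.distrib sum_subtractf sum_br sum_distrib_left[symmetric] n_def)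
    also have "\<dots> = real m - cst * real m" unfolding cst_def using npos by (simp add: power2_eq_square field_simps)
    also have "\<dots> \<le> real m" unfolding cst_def by simp
    finally show ?thesis .
  qed
  have key: "inv (a i) \<otimes> inv (c l) \<in> B \<longleftrightarrow> i = l" if "i \<in> {1..m}" "l \<in> {1..m}" for i l
  proof
    assume "inv (a i) \<otimes> inv (c l) \<in> B"
    then obtain j where j: "j \<in> {1..m}" "b j = inv (a i) \<otimes> inv (c l)" unfolding B_def by auto
    then have "a i \<otimes> b j \<otimes> c l = \<one>" using abc_one a_in b_in c_in that by blast
    then show "i = l" using match that j by blast
  next
    assume "i = l"
    then have "a i \<otimes> b i \<otimes> c l = \<one>" using match that by blast
    then have "b i = inv (a i) \<otimes> inv (c l)" using abc_one a_in b_in c_in that by blast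
    then show "inv (a i) \<otimes> inv (c l) \<in> B" unfolding B_def using that by force
  qed
  have Tbr: "T (\<lambda>x. complex_of_real (br x)) (inv (c l)) = 1" if l: "l \<in> {1..m}" for l
  proof -
    have "T (\<lambda>x. complex_of_real (br x)) (inv (c l)) = (\<Sum>i\<in>{1..m}. if i = l then 1 else 0)"
      unfolding Tc_def br_def using key l by (intro sum.cong refl) auto
    also have "\<dots> = 1" using l by simp
    finally show ?thesis .
  qed
  have Thh: "T hh (inv (c l)) = 1 - of_nat m * complex_of_real cst" if l: "l \<in> {1..m}" for l
  proof -
    have "T hh (inv (c l)) = T (\<lambda>x. complex_of_real (br x)) (inv (c l)) - T (\<lambda>x. complex_of_real cst) (inv (c l))"
      unfolding hh_def by (simp add: T_diff[symmetric])
    then show ?thesis using Tbr[OF l] T_const by simp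
  qed
  define L where "L = {1..m}"
  have "(\<Sum>l\<in>L. T hh (inv (c l))) = (\<Sum>l\<in>L. 1 - of_nat m * complex_of_real cst)"
    by (rule sum.cong) (simp_all add: L_def Thh)
  also have "\<dots> = of_nat m * (1 - of_nat m * complex_of_real cst)" by (simp add: L_def)
  also have "\<dots> = complex_of_real (real m - real m * real m * cst)" by (simp add: algebra_simps)
  finally have "(\<Sum>l\<in>L. T hh (inv (c l))) = complex_of_real (real m - real m * real m * cst)" .
  then have lhs: "cmod (\<Sum>l\<in>L. T hh (inv (c l))) = \<bar>real m - real m * real m * cst\<bar>"
    by (metis norm_of_real)
  have X: "(\<Sum>l\<in>L. (cmod (T hh (inv (c l))))^2) \<le> nr (T hh)"
  proof -
    have inj: "inj_on (\<lambda>l. inv (c l)) L"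
    proof (rule inj_onI)
      fix i j assume ij: "i \<in> L" "j \<in> L" "inv (c i) = inv (c j)"
      then have "c i = c j" using c_in L_def by (metis inv_inv)
      then show "i = j" using c_inj ij L_def by (meson inj_onD)
    qed
    have "(\<Sum>l\<in>L. (cmod (T hh (inv (c l))))^2) = (\<Sum>y\<in>(\<lambda>l. inv (c l)) ` L. (cmod (T hh y))^2)"
      by (simp add: sum.reindex[OF inj])
    also have "\<dots> \<le> nr (T hh)" unfolding nrS_def
      by (rule sum_mono2[OF finG]) (use c_in L_def in auto)
    finally show ?thesis .
  qed
  have Y: "nr (T hh) \<le> real m * real n * real m / real (card I)"
  proof -
    have "nr (T hh) * real (card I) \<le> real m * real n * nr hh" using spectral[OF ms_hh] n_def by simp
    also have "\<dots> \<le> real m * real n * real m" using nr_hh by (intro mult_left_mono) auto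
    finally show ?thesis using Ipos by (simp add: field_simps)
  qed
  have "cmod (\<Sum>l\<in>L. T hh (inv (c l))) \<le> sqrt (real (card L) * (\<Sum>l\<in>L. (cmod (T hh (inv (c l))))^2))"
    by (rule cs_complex) (simp add: L_def)
  also have "sqrt (real (card L) * (\<Sum>l\<in>L. (cmod (T hh (inv (c l))))^2)) \<le> sqrt (real m * nr (T hh))"
  proof -
    have "card L = m" by (simp add: L_def)
    then show ?thesis using X by (intro real_sqrt_le_mono) (simp add: mult_left_mono)
  qed
  also have "sqrt (real m * nr (T hh)) \<le> sqrt (real m * (real m * real n * real m / real (card I)))"
    using Y by (intro real_sqrt_le_mono mult_left_mono) auto
  finally have "\<bar>real m - real m * real m * cst\<bar> \<le> sqrt (real m ^ 3 * real n / real (card I))"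
    using lhs by (simp add: power3_eq_cube ac_simps)
  moreover have "real m * real m * cst = real m ^ 3 / real n" unfolding cst_def by (simp add: power3_eq_cube)
  ultimately show ?thesis unfolding n_def by linarith
qed

end

lemma SL2_carrier: "(a,b,c,d) \<in> carrier (SL2 p) \<longleftrightarrow>
   0 \<le> a \<and> a < p \<and> 0 \<le> b \<and> b < p \<and> 0 \<le> c \<and> c < p \<and> 0 \<le> d \<and> d < p \<and> (a*d - b*c) mod p = 1"
  by (auto simp: SL2_def)

lemma SL2_mult: "(a,b,c,d) \<otimes>\<^bsub>SL2 p\<^esub> (e,f,g,h) =
   ((a*e + b*g) mod p, (a*f + b*h) mod p, (c*e + d*g) mod p, (c*f + d*h) mod p)"
  by (simp add: SL2_def)

lemma SL2_one: "\<one>\<^bsub>SL2 p\<^esub> = (1,0,0,1)"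
  by (simp add: SL2_def)

lemma modp2: "((x mod p) * y + (z mod p) * w) mod p = (x*y + z*w) mod (p::int)"
  by (metis mod_add_eq mod_mult_left_eq)
lemma modp2': "(y * (x mod p) + w * (z mod p)) mod p = (y*x + w*z) mod (p::int)"
  by (metis mod_add_eq mod_mult_right_eq)
lemma moddet: "((x mod p) * (y mod p) - (z mod p) * (w mod p)) mod p = (x*y - z*w) mod (p::int)"
  by (metis mod_diff_eq mod_mult_eq)

lemma modeq_intro: "(p::int) dvd (X - Y) \<Longrightarrow> 0 \<le> Y \<Longrightarrow> Y < p \<Longrightarrow> X mod p = Y"
  by (metis mod_eq_dvd_iff mod_pos_pos_trivial)

lemma dvd_range_eq: "(p::int) dvd (x - y) \<Longrightarrow> 0 \<le> x \<Longrightarrow> x < p \<Longrightarrow> 0 \<le> y \<Longrightarrow> y < p \<Longrightarrow> x = y"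
proof (rule ccontr)
  assume a: "p dvd (x - y)" "0 \<le> x" "x < p" "0 \<le> y" "y < p" "x \<noteq> y"
  then have "\<bar>p\<bar> \<le> \<bar>x - y\<bar>" by (intro dvd_imp_le_int) auto
  with a show False by linarith
qed

lemma mod_in_range: "(p::int) > 0 \<Longrightarrow> 0 \<le> x mod p \<and> x mod p < p" by simp

lemma SL2_group: assumes p: "(p::int) > 1" shows "group (SL2 p)"
proof (rule groupI)
  have p0: "p > 0" using p by simp
  fix x y assume x: "x \<in> carrier (SL2 p)" and y: "y \<in> carrier (SL2 p)"
  obtain a b c d where xe: "x = (a,b,c,d)" by (cases x) auto
  obtain e f g h where ye: "y = (e,f,g,h)" by (cases y) auto
  have dx: "(a*d - b*c) mod p = 1" and dy: "(e*h - f*g) mod p = 1" using x y xe ye by (auto simp: SL2_carrier)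
  have "((a*e + b*g) * (c*f + d*h) - (a*f + b*h) * (c*e + d*g)) = (a*d - b*c) * (e*h - f*g)"
    by (simp add: algebra_simps)
  then have "(((a*e + b*g) mod p) * ((c*f + d*h) mod p) - ((a*f + b*h) mod p) * ((c*e + d*g) mod p)) mod p = 1"
    by (simp add: moddet) (metis dx dy mod_mult_eq mult_1 mod_pos_pos_trivial p zero_less_one zero_le_one)
  then show "x \<otimes>\<^bsub>SL2 p\<^esub> y \<in> carrier (SL2 p)" unfolding xe ye SL2_mult SL2_carrier using p0 by simp
next
  show "\<one>\<^bsub>SL2 p\<^esub> \<in> carrier (SL2 p)" using p by (simp add: SL2_one SL2_carrier)
next
  fix x y z assume "x \<in> carrier (SL2 p)" "y \<in> carrier (SL2 p)" "z \<in> carrier (SL2 p)"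
  obtain a b c d where xe: "x = (a,b,c,d)" by (cases x) auto
  obtain e f g h where ye: "y = (e,f,g,h)" by (cases y) auto
  obtain i j k l where ze: "z = (i,j,k,l)" by (cases z) auto
  show "x \<otimes>\<^bsub>SL2 p\<^esub> y \<otimes>\<^bsub>SL2 p\<^esub> z = x \<otimes>\<^bsub>SL2 p\<^esub> (y \<otimes>\<^bsub>SL2 p\<^esub> z)"
    unfolding xe ye ze SL2_mult by (simp only: modp2 modp2' prod.inject) (simp add: algebra_simps)
next
  fix x assume x: "x \<in> carrier (SL2 p)"
  obtain a b c d where xe: "x = (a,b,c,d)" by (cases x) auto
  show "\<one>\<^bsub>SL2 p\<^esub> \<otimes>\<^bsub>SL2 p\<^esub> x = x" using x unfolding xe SL2_one SL2_mult SL2_carrier by simp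
next
  fix x assume x: "x \<in> carrier (SL2 p)"
  obtain a b c d where xe: "x = (a,b,c,d)" by (cases x) auto
  have r: "0 \<le> a" "a < p" "0 \<le> b" "b < p" "0 \<le> c" "c < p" "0 \<le> d" "d < p" and dx: "(a*d - b*c) mod p = 1"
    using x xe by (auto simp: SL2_carrier)
  define y where "y = (d, (-b) mod p, (-c) mod p, a)"
  have y: "y \<in> carrier (SL2 p)"
  proof -
    have "(d * a - ((-b) mod p) * ((-c) mod p)) mod p = (d*a - (-b)*(-c)) mod p"
      by (metis mod_diff_right_eq mod_mult_eq)
    also have "\<dots> = 1" using dx by (simp add: algebra_simps)
    finally show ?thesis unfolding y_def SL2_carrier using r p by simp
  qed
  have "y \<otimes>\<^bsub>SL2 p\<^esub> x = (1,0,0,1)"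
  proof -
    have e1: "(d * a + ((-b) mod p) * c) mod p = 1"
      using dx by (metis mod_add_right_eq mod_mult_left_eq mult.commute diff_conv_add_uminus mult_minus_left)
    have e2: "(d * b + ((-b) mod p) * d) mod p = 0"
      by (metis mod_add_right_eq mod_mult_left_eq mult.commute mult_minus_left add.right_inverse mod_0)
    have e3: "(((-c) mod p) * a + a * c) mod p = 0"
      by (metis mod_add_left_eq mod_mult_left_eq mult.commute mult_minus_left add.left_inverse mod_0)
    have e4: "(((-c) mod p) * b + a * d) mod p = 1"
      using dx by (metis mod_add_left_eq mod_mult_left_eq mult.commute diff_conv_add_uminus mult_minus_left add.commute)
    show ?thesis unfolding y_def xe SL2_mult using e1 e2 e3 e4 by simp
  qed
  then show "\<exists>y\<in>carrier (SL2 p). y \<otimes>\<^bsub>SL2 p\<^esub> x = \<one>\<^bsub>SL2 p\<^esub>" using y by (auto simp: SL2_one)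
qed

locale psl = fixes p :: int assumes pp: "prime p"
begin

lemma p1: "p > 1" using pp prime_gt_1_int by blast

interpretation S: group "SL2 p" using SL2_group p1 by blast

lemma pm1sq: "((p-1)*(p-1)) mod p = 1"
proof -
  have "(p-1)*(p-1) = 1 + (p-2)*p" by (simp add: algebra_simps)
  then show ?thesis using p1 by simp
qed

lemma Zm: "(p-1, 0, 0, p-1) \<in> carrier (SL2 p)"
  using p1 pm1sq by (simp add: SL2_carrier)

lemma Z_sub: "SL2_center p \<subseteq> carrier (SL2 p)"
  using Zm S.one_closed unfolding SL2_center_def SL2_one by auto

lemma Zm_sq: "(p-1, 0, 0, p-1) \<otimes>\<^bsub>SL2 p\<^esub> (p-1, 0, 0, p-1) = (1,0,0,1)"
  using pm1sq by (simp add: SL2_mult)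

lemma Z_central: assumes z: "z \<in> SL2_center p" and x: "x \<in> carrier (SL2 p)"
  shows "z \<otimes>\<^bsub>SL2 p\<^esub> x = x \<otimes>\<^bsub>SL2 p\<^esub> z"
proof -
  obtain a b c d where xe: "x = (a,b,c,d)" by (cases x) auto
  show ?thesis
  proof (cases "z = (1,0,0,1)")
    case True
    then show ?thesis using x S.l_one S.r_one by (simp add: SL2_one)
  next
    case False
    then have "z = (p-1,0,0,p-1)" using z by (simp add: SL2_center_def)
    then show ?thesis unfolding xe by (simp add: SL2_mult algebra_simps)
  qed
qed

lemma Z_subgroup: "subgroup (SL2_center p) (SL2 p)"
proof (rule S.subgroupI)
  show "SL2_center p \<subseteq> carrier (SL2 p)" by (rule Z_sub)
  show "SL2_center p \<noteq> {}" by (simp add: SL2_center_def)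
next
  fix z assume z: "z \<in> SL2_center p"
  have "inv\<^bsub>SL2 p\<^esub> (p-1,0,0,p-1) = (p-1,0,0,p-1)"
    using Zm Zm_sq by (intro S.inv_equality) (auto simp: SL2_one)
  moreover have "inv\<^bsub>SL2 p\<^esub> (1,0,0,1) = (1,0,0,1)" using S.inv_one by (simp add: SL2_one)
  ultimately show "inv\<^bsub>SL2 p\<^esub> z \<in> SL2_center p" using z unfolding SL2_center_def by auto
next
  fix z w assume "z \<in> SL2_center p" "w \<in> SL2_center p"
  moreover have "(1,0,0,1) \<otimes>\<^bsub>SL2 p\<^esub> x = x" "x \<otimes>\<^bsub>SL2 p\<^esub> (1,0,0,1) = x"
    if "x \<in> carrier (SL2 p)" for x using S.l_one[OF that] S.r_one[OF that] by (simp_all add: SL2_one)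
  moreover have "(1,0,0,1) \<in> carrier (SL2 p)" using S.one_closed by (simp add: SL2_one)
  ultimately show "z \<otimes>\<^bsub>SL2 p\<^esub> w \<in> SL2_center p"
    using Zm Zm_sq unfolding SL2_center_def by auto
qed

lemma Z_normal: "SL2_center p \<lhd> SL2 p"
proof -
  have "x \<otimes>\<^bsub>SL2 p\<^esub> h \<otimes>\<^bsub>SL2 p\<^esub> inv\<^bsub>SL2 p\<^esub> x \<in> SL2_center p"
    if x: "x \<in> carrier (SL2 p)" and h: "h \<in> SL2_center p" for x h
  proof -
    have hc: "h \<in> carrier (SL2 p)" using h Z_sub by blast
    have "x \<otimes>\<^bsub>SL2 p\<^esub> h \<otimes>\<^bsub>SL2 p\<^esub> inv\<^bsub>SL2 p\<^esub> x = h \<otimes>\<^bsub>SL2 p\<^esub> x \<otimes>\<^bsub>SL2 p\<^esub> inv\<^bsub>SL2 p\<^esub> x"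
      using Z_central[OF h x] by simp
    also have "\<dots> = h" using x hc by (simp add: S.m_assoc)
    finally show ?thesis using h by simp
  qed
  then show ?thesis using Z_subgroup by (simp add: S.normal_inv_iff)
qed

interpretation N: normal "SL2_center p" "SL2 p" by (rule Z_normal)

lemma PSL2_group: "group (PSL2 p)"
  unfolding PSL2_def by (rule N.factorgroup_is_group)

lemma SL2_finite: "finite (carrier (SL2 p))"
proof -
  have "carrier (SL2 p) \<subseteq> {0..<p} \<times> {0..<p} \<times> {0..<p} \<times> {0..<p}"
    by (auto simp: SL2_def)
  then show ?thesis by (rule finite_subset) simp
qed

lemma PSL2_carrier: "carrier (PSL2 p) = (\<lambda>x. SL2_center p #>\<^bsub>SL2 p\<^esub> x) ` carrier (SL2 p)"
  unfolding PSL2_def by (rule carrier_FactGroup)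

lemma PSL2_finite: "finite (carrier (PSL2 p))"
  using SL2_finite PSL2_carrier by simp

lemma card_PSL2_SL2: "card (carrier (PSL2 p)) \<le> card (carrier (SL2 p))"
  unfolding PSL2_carrier using SL2_finite by (rule card_image_le)

lemma card_SL2: "card (carrier (SL2 p)) \<le> nat p ^ 3"
proof -
  define phi :: "int \<times> int \<times> int \<times> int \<Rightarrow> int \<times> int \<times> int" where
    "phi x = (case x of (a,b,c,d) \<Rightarrow> if a = 0 then (0, d, c) else (a, b, c))" for x
  have "inj_on phi (carrier (SL2 p))"
  proof (rule inj_onI)
    fix x y assume x: "x \<in> carrier (SL2 p)" and y: "y \<in> carrier (SL2 p)" and e: "phi x = phi y"
    obtain a b c d where xe: "x = (a,b,c,d)" by (cases x) auto
    obtain a' b' c' d' where ye: "y = (a',b',c',d')" by (cases y) auto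
    have rx: "0 \<le> a" "a < p" "0 \<le> b" "b < p" "0 \<le> c" "c < p" "0 \<le> d" "d < p" and dx: "(a*d - b*c) mod p = 1"
      using x xe by (auto simp: SL2_carrier)
    have ry: "0 \<le> a'" "a' < p" "0 \<le> b'" "b' < p" "0 \<le> c'" "c' < p" "0 \<le> d'" "d' < p" and dy: "(a'*d' - b'*c') mod p = 1"
      using y ye by (auto simp: SL2_carrier)
    show "x = y"
    proof (cases "a = 0")
      case True
      then have a': "a' = 0" and dd: "d = d'" and cc: "c = c'" using e unfolding xe ye phi_def by (auto split: if_splits)
      have "(a*d - b*c) mod p = (a'*d' - b'*c') mod p" using dx dy by simp
      then have "p dvd ((a*d - b*c) - (a'*d' - b'*c'))" by (simp add: mod_eq_dvd_iff)
      then have "p dvd (b' - b) * c" using True a' cc by (simp add: algebra_simps)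
      moreover have "\<not> p dvd c"
      proof
        assume "p dvd c"
        then have "(a*d - b*c) mod p = 0" using True by simp
        then show False using dx by simp
      qed
      ultimately have "p dvd (b' - b)" using pp by (simp add: prime_dvd_mult_iff)
      then have "b' = b" using rx ry by (intro dvd_range_eq) auto
      then show ?thesis using xe ye True a' dd cc by simp
    next
      case False
      then have aa: "a = a'" and bb: "b = b'" and cc: "c = c'" using e unfolding xe ye phi_def by (auto split: if_splits)
      have "(a*d - b*c) mod p = (a'*d' - b'*c') mod p" using dx dy by simp
      then have "p dvd ((a*d - b*c) - (a'*d' - b'*c'))" by (simp add: mod_eq_dvd_iff)
      then have "p dvd a * (d - d')" using aa bb cc by (simp add: algebra_simps)
      moreover have "\<not> p dvd a" using False rx by (metis dvd_imp_le_int abs_of_nonneg order_less_le_trans abs_ge_self linorder_not_le)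
      ultimately have "p dvd (d - d')" using pp by (simp add: prime_dvd_mult_iff)
      then have "d = d'" using rx ry by (intro dvd_range_eq) auto
      then show ?thesis using xe ye aa bb cc by simp
    qed
  qed
  moreover have "phi ` carrier (SL2 p) \<subseteq> {0..<p} \<times> {0..<p} \<times> {0..<p}"
    by (auto simp: phi_def SL2_def split: if_splits)
  ultimately have "card (carrier (SL2 p)) \<le> card ({0..<p} \<times> {0..<p} \<times> {0..<p})"
    by (intro card_inj_on_le) auto
  also have "\<dots> = nat p ^ 3" by (simp add: card_cartesian_product power3_eq_cube)
  finally show ?thesis .
qed

end

context psl begin

interpretation S: group "SL2 p" using SL2_group p1 by blast
interpretation N: normal "SL2_center p" "SL2 p" by (rule Z_normal)
interpretation G: group "PSL2 p" by (rule PSL2_group)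

abbreviation cos :: "int \<times> int \<times> int \<times> int \<Rightarrow> (int \<times> int \<times> int \<times> int) set" where
  "cos x \<equiv> SL2_center p #>\<^bsub>SL2 p\<^esub> x"

lemma cos_in: "x \<in> carrier (SL2 p) \<Longrightarrow> cos x \<in> carrier (PSL2 p)"
  unfolding PSL2_carrier by blast

lemma cos_mult: "x \<in> carrier (SL2 p) \<Longrightarrow> y \<in> carrier (SL2 p) \<Longrightarrow> cos x \<otimes>\<^bsub>PSL2 p\<^esub> cos y = cos (x \<otimes>\<^bsub>SL2 p\<^esub> y)"
  unfolding PSL2_def by (simp add: N.rcos_sum)

lemma cos_inv: "x \<in> carrier (SL2 p) \<Longrightarrow> inv\<^bsub>PSL2 p\<^esub> (cos x) = cos (inv\<^bsub>SL2 p\<^esub> x)"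
  using N.inv_FactGroup[of "cos x"] N.rcos_inv[of x] cos_in unfolding PSL2_def PSL2_carrier
  by (simp add: PSL2_def)

lemma cos_pow: "x \<in> carrier (SL2 p) \<Longrightarrow> cos x [^]\<^bsub>PSL2 p\<^esub> (n::nat) = cos (x [^]\<^bsub>SL2 p\<^esub> n)"
  unfolding PSL2_def by (rule N.FactGroup_pow)

lemma PSL2_one: "\<one>\<^bsub>PSL2 p\<^esub> = SL2_center p"
  unfolding PSL2_def by simp

lemma cos_one: "cos (1,0,0,1) = \<one>\<^bsub>PSL2 p\<^esub>"
  using S.coset_mult_one[OF Z_sub] by (simp add: SL2_one PSL2_one)

lemma cos_eq_one: "x \<in> carrier (SL2 p) \<Longrightarrow> cos x = \<one>\<^bsub>PSL2 p\<^esub> \<Longrightarrow> x \<in> SL2_center p"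
  unfolding PSL2_one using S.rcos_self[OF _ Z_subgroup] by blast

definition "u0 = ((1::int), (1::int), (0::int), (1::int))"

lemma u0_in: "u0 \<in> carrier (SL2 p)" unfolding u0_def using p1 by (simp add: SL2_carrier)

lemma u0_pow: "u0 [^]\<^bsub>SL2 p\<^esub> (n::nat) = (1, int n mod p, 0, 1)"
proof (induction n)
  case 0 then show ?case by (simp add: SL2_one)
next
  case (Suc n)
  have "u0 [^]\<^bsub>SL2 p\<^esub> Suc n = (1, int n mod p, 0, 1) \<otimes>\<^bsub>SL2 p\<^esub> u0" using Suc by simp
  also have "\<dots> = (1, int (Suc n) mod p, 0, 1)" unfolding u0_def SL2_mult using p1
    by (simp add: mod_add_right_eq)
  finally show ?case .
qed

definition "uu = cos u0"

lemma uu_in: "uu \<in> carrier (PSL2 p)" unfolding uu_def by (rule cos_in[OF u0_in])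

lemma uu_pow: "uu [^]\<^bsub>PSL2 p\<^esub> (n::nat) = cos (1, int n mod p, 0, 1)"
  unfolding uu_def by (simp add: cos_pow u0_in u0_pow)

lemma uu_p: "uu [^]\<^bsub>PSL2 p\<^esub> (nat p) = \<one>\<^bsub>PSL2 p\<^esub>"
  using p1 by (simp add: uu_pow cos_one)

lemma uu_ne: "uu \<noteq> \<one>\<^bsub>PSL2 p\<^esub>"
proof
  assume "uu = \<one>\<^bsub>PSL2 p\<^esub>"
  then have "u0 \<in> SL2_center p" using cos_eq_one u0_in unfolding uu_def by blast
  then show False unfolding u0_def SL2_center_def by auto
qed

lemma modinv_ex: assumes "0 < s" "s < p" shows "\<exists>t. 0 \<le> t \<and> t < p \<and> (s * t) mod p = 1"
proof -
  have "\<not> p dvd s" using assms by (simp add: zdvd_not_zless)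
  then have "coprime s p" using pp by (simp add: prime_imp_coprime coprime_commute)
  then obtain x where "[s * x = 1] (mod p)" using cong_solve_coprime_int by blast
  then have "(s * (x mod p)) mod p = 1" using p1 by (simp add: cong_def mod_mult_right_eq)
  moreover have "0 \<le> x mod p" "x mod p < p" using p1 by simp_all
  ultimately show ?thesis by blast
qed

definition "minv s = (SOME t. 0 \<le> t \<and> t < p \<and> (s * t) mod p = 1)"

lemma minv: "0 < s \<Longrightarrow> s < p \<Longrightarrow> 0 \<le> minv s \<and> minv s < p \<and> (s * minv s) mod p = 1"
  unfolding minv_def by (rule someI_ex) (rule modinv_ex)

definition "dd (s::nat) = cos (minv (int s), 0, 0, int s)"

lemma dmat_in: "0 < s \<Longrightarrow> int s < p \<Longrightarrow> (minv (int s), 0, 0, int s) \<in> carrier (SL2 p)"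
  using minv[of "int s"] by (simp add: SL2_carrier mult.commute)

lemma dd_in: "0 < s \<Longrightarrow> int s < p \<Longrightarrow> dd s \<in> carrier (PSL2 p)"
  unfolding dd_def by (rule cos_in[OF dmat_in])

lemma dd_conj: assumes "0 < s" "int s < p"
  shows "inv\<^bsub>PSL2 p\<^esub> (dd s) \<otimes>\<^bsub>PSL2 p\<^esub> uu \<otimes>\<^bsub>PSL2 p\<^esub> dd s = uu [^]\<^bsub>PSL2 p\<^esub> (s^2)"
proof -
  define t where "t = minv (int s)"
  have t: "0 \<le> t" "t < p" "(int s * t) mod p = 1" using minv[of "int s"] assms unfolding t_def by auto
  have dm: "(t, 0, 0, int s) \<in> carrier (SL2 p)" using dmat_in[OF assms] unfolding t_def .
  have im: "(int s, 0, 0, t) \<in> carrier (SL2 p)" using t assms by (simp add: SL2_carrier)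
  have iv: "inv\<^bsub>SL2 p\<^esub> (t, 0, 0, int s) = (int s, 0, 0, t)"
  proof (rule S.inv_equality)
    show "(int s, 0, 0, t) \<otimes>\<^bsub>SL2 p\<^esub> (t, 0, 0, int s) = \<one>\<^bsub>SL2 p\<^esub>"
      using t by (simp add: SL2_mult SL2_one mult.commute)
  qed (use dm im in auto)
  have prod: "(int s, 0, 0, t) \<otimes>\<^bsub>SL2 p\<^esub> u0 \<otimes>\<^bsub>SL2 p\<^esub> (t, 0, 0, int s) = (1, int (s^2) mod p, 0, 1)"
    using t assms by (simp add: SL2_mult u0_def power2_eq_square mult.commute)
  have "inv\<^bsub>PSL2 p\<^esub> (dd s) \<otimes>\<^bsub>PSL2 p\<^esub> uu \<otimes>\<^bsub>PSL2 p\<^esub> dd s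
      = cos ((int s, 0, 0, t) \<otimes>\<^bsub>SL2 p\<^esub> u0 \<otimes>\<^bsub>SL2 p\<^esub> (t, 0, 0, int s))"
    unfolding dd_def uu_def t_def[symmetric] using dm im u0_in
    by (simp add: cos_inv iv cos_mult)
  also have "\<dots> = uu [^]\<^bsub>PSL2 p\<^esub> (s^2)" unfolding prod uu_pow ..
  finally show ?thesis .
qed

lemma sq_dist: assumes "0 < s" "2 * int s < p" "0 < s'" "2 * int s' < p" "[s^2 = s'^2] (mod nat p)"
  shows "s = s'"
proof -
  have "[int (s^2) = int (s'^2)] (mod int (nat p))" using assms(5) by (simp only: cong_int_iff)
  then have "[int s^2 = int s'^2] (mod p)" using p1 by simp
  then have "p dvd (int s - int s') * (int s + int s')" by (simp add: cong_iff_dvd_diff power2_eq_square algebra_simps)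
  then have "p dvd (int s - int s') \<or> p dvd (int s + int s')" using pp by (simp add: prime_dvd_mult_iff)
  moreover have "\<not> p dvd (int s + int s')"
    using assms by (intro zdvd_not_zless) auto
  ultimately have "p dvd (int s - int s')" by blast
  then have "int s = int s'" using assms by (intro dvd_range_eq) auto
  then show ?thesis by simp
qed

end

context psl begin

interpretation S: group "SL2 p" using SL2_group p1 by blast

lemma gen_SL:
  fixes F :: "int \<times> int \<times> int \<times> int \<Rightarrow> 'b"
  assumes hF: "\<And>x y. x \<in> carrier (SL2 p) \<Longrightarrow> y \<in> carrier (SL2 p) \<Longrightarrow>
      F (x \<otimes>\<^bsub>SL2 p\<^esub> (inv\<^bsub>SL2 p\<^esub> y \<otimes>\<^bsub>SL2 p\<^esub> u0 \<otimes>\<^bsub>SL2 p\<^esub> y)) = F x"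
    and X: "X \<in> carrier (SL2 p)"
  shows "F X = F \<one>\<^bsub>SL2 p\<^esub>"
proof -
  define Inv where "Inv = {g \<in> carrier (SL2 p). \<forall>x\<in>carrier (SL2 p). F (x \<otimes>\<^bsub>SL2 p\<^esub> g) = F x}"
  have one_Inv: "\<one>\<^bsub>SL2 p\<^esub> \<in> Inv" unfolding Inv_def by simp
  have mult_Inv: "g \<otimes>\<^bsub>SL2 p\<^esub> h \<in> Inv" if "g \<in> Inv" "h \<in> Inv" for g h
    using that unfolding Inv_def by (simp add: S.m_assoc[symmetric])
  have inv_Inv: "inv\<^bsub>SL2 p\<^esub> g \<in> Inv" if "g \<in> Inv" for g
  proof -
    have g: "g \<in> carrier (SL2 p)" using that unfolding Inv_def by simp
    have "F (x \<otimes>\<^bsub>SL2 p\<^esub> inv\<^bsub>SL2 p\<^esub> g) = F x" if x: "x \<in> carrier (SL2 p)" for x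
    proof -
      have "F (x \<otimes>\<^bsub>SL2 p\<^esub> inv\<^bsub>SL2 p\<^esub> g) = F ((x \<otimes>\<^bsub>SL2 p\<^esub> inv\<^bsub>SL2 p\<^esub> g) \<otimes>\<^bsub>SL2 p\<^esub> g)"
        using \<open>g \<in> Inv\<close> g x unfolding Inv_def by simp
      also have "(x \<otimes>\<^bsub>SL2 p\<^esub> inv\<^bsub>SL2 p\<^esub> g) \<otimes>\<^bsub>SL2 p\<^esub> g = x" using g x by (simp add: S.m_assoc)
      finally show ?thesis .
    qed
    then show ?thesis unfolding Inv_def using g by simp
  qed
  have pow_Inv: "g [^]\<^bsub>SL2 p\<^esub> (n::nat) \<in> Inv" if "g \<in> Inv" for g n
    by (induction n) (use one_Inv mult_Inv that in auto)
  have conj_Inv: "inv\<^bsub>SL2 p\<^esub> y \<otimes>\<^bsub>SL2 p\<^esub> u0 \<otimes>\<^bsub>SL2 p\<^esub> y \<in> Inv" if "y \<in> carrier (SL2 p)" for y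
    unfolding Inv_def using hF that u0_in by simp
  have u0_Inv: "u0 \<in> Inv" using conj_Inv[OF S.one_closed] u0_in by simp
  have U_Inv: "(1, t, 0, 1) \<in> Inv" if "0 \<le> t" "t < p" for t
  proof -
    have "(1, t, 0, 1) = u0 [^]\<^bsub>SL2 p\<^esub> (nat t)" using that by (simp add: u0_pow)
    then show ?thesis using pow_Inv[OF u0_Inv] by simp
  qed
  define w where "w = ((0::int), p - 1, (1::int), (0::int))"
  have w_in: "w \<in> carrier (SL2 p)" unfolding w_def using p1 by (simp add: SL2_carrier)
  have wi_in: "(0, 1, p - 1, 0) \<in> carrier (SL2 p)" using p1 pm1sq by (simp add: SL2_carrier)
  have w_inv: "inv\<^bsub>SL2 p\<^esub> w = (0, 1, p - 1, 0)"
    by (rule S.inv_equality) (use w_in wi_in p1 pm1sq in \<open>simp_all add: w_def SL2_mult SL2_one\<close>)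
  have m1: "(-1::int) mod p = p - 1" using p1 by (simp add: zmod_minus1)
  have Lm: "inv\<^bsub>SL2 p\<^esub> w \<otimes>\<^bsub>SL2 p\<^esub> u0 \<otimes>\<^bsub>SL2 p\<^esub> w = (1, 0, p - 1, 1)"
    unfolding w_inv using p1 pm1sq by (simp add: w_def u0_def SL2_mult m1)
  have Lm_Inv: "(1, 0, p - 1, 1) \<in> Inv" using conj_Inv[OF w_in] Lm by simp
  have Lm_pow: "(1, 0, p - 1, 1) [^]\<^bsub>SL2 p\<^esub> (n::nat) = (1, 0, (- int n) mod p, 1)" for n
  proof (induction n)
    case 0 then show ?case by (simp add: SL2_one)
  next
    case (Suc n)
    have "(1, 0, p - 1, 1) [^]\<^bsub>SL2 p\<^esub> Suc n = (1, 0, (- int n) mod p, 1) \<otimes>\<^bsub>SL2 p\<^esub> (1, 0, p - 1, 1)"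
      using Suc by simp
    also have "\<dots> = (1, 0, (- int (Suc n)) mod p, 1)"
    proof -
      have "((- int n) mod p + (p - 1)) mod p = (- int n + (p - 1)) mod p" by (simp add: mod_add_left_eq)
      also have "\<dots> = (- int (Suc n)) mod p"
      proof -
        have "- int n + (p - 1) = - int (Suc n) + 1 * p" by simp
        then show ?thesis by (simp only: mod_mult_self1)
      qed
      finally show ?thesis using p1 by (simp add: SL2_mult)
    qed
    finally show ?case .
  qed
  have L_Inv: "(1, 0, t, 1) \<in> Inv" if "0 \<le> t" "t < p" for t
  proof -
    have "(- int (nat (p - t))) mod p = t"
    proof -
      have "- int (nat (p - t)) = t + (-1) * p" using that by simp
      then show ?thesis using that by (simp only: mod_mult_self1) simp
    qed
    then have "(1, 0, t, 1) = (1, 0, p - 1, 1) [^]\<^bsub>SL2 p\<^esub> (nat (p - t))" by (simp add: Lm_pow)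
    then show ?thesis using pow_Inv[OF Lm_Inv] by simp
  qed
  have cne0: "Y \<in> Inv" if Y: "Y \<in> carrier (SL2 p)" and Yc: "fst (snd (snd Y)) \<noteq> 0" for Y
  proof -
    obtain a b c d where Ye: "Y = (a,b,c,d)" by (cases Y) auto
    have r: "0 \<le> a" "a < p" "0 \<le> b" "b < p" "0 \<le> c" "c < p" "0 \<le> d" "d < p" and dx: "(a*d - b*c) mod p = 1"
      using Y Ye by (auto simp: SL2_carrier)
    have c0: "c \<noteq> 0" using Yc Ye by simp
    define c' where "c' = minv c"
    have c': "0 \<le> c'" "c' < p" "(c * c') mod p = 1" using minv[of c] c0 r unfolding c'_def by auto
    define x where "x = ((a - 1) * c') mod p"
    define y where "y = ((d - 1) * c') mod p"
    define qx where "qx = ((a - 1) * c') div p"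
    define qy where "qy = ((d - 1) * c') div p"
    define rr where "rr = (c * c') div p"
    define ss where "ss = (a*d - b*c) div p"
    have hx: "x = (a - 1) * c' - qx * p" unfolding x_def qx_def by (metis minus_div_mult_eq_mod)
    have hy: "y = (d - 1) * c' - qy * p" unfolding y_def qy_def by (metis minus_div_mult_eq_mod)
    have hc: "c * c' = 1 + rr * p" unfolding rr_def using c'(3) by (metis div_mult_mod_eq add.commute)
    have hd: "a*d - b*c = 1 + ss * p" unfolding ss_def using dx by (metis div_mult_mod_eq add.commute)
    have xr: "0 \<le> x" "x < p" "0 \<le> y" "y < p" unfolding x_def y_def using p1 by simp_all
    have E1: "(1 + x * c) mod p = a"
    proof (rule modeq_intro)
      have "1 + x*c - a = (a-1)*(c*c') + 1 - a - p*(qx*c)" unfolding hx by (simp add: algebra_simps)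
      also have "\<dots> = p * ((a-1)*rr - qx*c)" unfolding hc by (simp add: algebra_simps)
      finally show "p dvd (1 + x * c - a)" by simp
    qed (use r in auto)
    have E2: "(a * y + x) mod p = b"
    proof (rule modeq_intro)
      have "a*y + x - b = (a*d - b*c)*c' + b*(c*c') - c' - b - p*(a*qy + qx)"
        unfolding hx hy by (simp add: algebra_simps)
      also have "\<dots> = p*(ss*c' + b*rr - a*qy - qx)" unfolding hc hd by (simp add: algebra_simps)
      finally show "p dvd (a * y + x - b)" by simp
    qed (use r in auto)
    have E3: "(c * y + 1) mod p = d"
    proof (rule modeq_intro)
      have "c*y + 1 - d = (d-1)*(c*c') + 1 - d - p*(qy*c)" unfolding hy by (simp add: algebra_simps)
      also have "\<dots> = p * ((d-1)*rr - qy*c)" unfolding hc by (simp add: algebra_simps)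
      finally show "p dvd (c * y + 1 - d)" by simp
    qed (use r in auto)
    have "(1, x, 0, 1) \<otimes>\<^bsub>SL2 p\<^esub> (1, 0, c, 1) \<otimes>\<^bsub>SL2 p\<^esub> (1, y, 0, 1) = Y"
    proof -
      have "(1, x, 0, 1) \<otimes>\<^bsub>SL2 p\<^esub> (1, 0, c, 1) = (a, x, c, 1)"
        using E1 xr r p1 by (simp add: SL2_mult)
      moreover have "(a, x, c, 1) \<otimes>\<^bsub>SL2 p\<^esub> (1, y, 0, 1) = (a, b, c, d)"
        using E2 E3 xr r p1 by (simp add: SL2_mult)
      ultimately show ?thesis using Ye by simp
    qed
    moreover have "(1, x, 0, 1) \<otimes>\<^bsub>SL2 p\<^esub> (1, 0, c, 1) \<otimes>\<^bsub>SL2 p\<^esub> (1, y, 0, 1) \<in> Inv"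
      using U_Inv L_Inv mult_Inv xr r by simp
    ultimately show ?thesis by simp
  qed
  have "X \<in> Inv"
  proof (cases "fst (snd (snd X)) = 0")
    case False then show ?thesis using cne0 X by blast
  next
    case True
    obtain a b c d where Xe: "X = (a,b,c,d)" by (cases X) auto
    have r: "0 \<le> a" "a < p" "0 \<le> b" "b < p" "0 \<le> c" "c < p" "0 \<le> d" "d < p" and dx: "(a*d - b*c) mod p = 1"
      using X Xe by (auto simp: SL2_carrier)
    have c0: "c = 0" using True Xe by simp
    have a0: "a \<noteq> 0" using dx c0 by auto
    have L1: "(1, 0, 1, 1) \<in> Inv" using L_Inv p1 by simp
    have L1c: "(1, 0, 1, 1) \<in> carrier (SL2 p)" using L1 unfolding Inv_def by simp
    have prod: "(1, 0, 1, 1) \<otimes>\<^bsub>SL2 p\<^esub> X = (a, b, a, (b + d) mod p)"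
      using r c0 unfolding Xe by (simp add: SL2_mult)
    have "(1, 0, 1, 1) \<otimes>\<^bsub>SL2 p\<^esub> X \<in> Inv"
      by (rule cne0) (use S.m_closed[OF L1c X] prod a0 in auto)
    then have "inv\<^bsub>SL2 p\<^esub> (1, 0, 1, 1) \<otimes>\<^bsub>SL2 p\<^esub> ((1, 0, 1, 1) \<otimes>\<^bsub>SL2 p\<^esub> X) \<in> Inv"
      using inv_Inv[OF L1] mult_Inv by blast
    also have "inv\<^bsub>SL2 p\<^esub> (1, 0, 1, 1) \<otimes>\<^bsub>SL2 p\<^esub> ((1, 0, 1, 1) \<otimes>\<^bsub>SL2 p\<^esub> X) = X"
      using L1c X by (simp add: S.m_assoc[symmetric])
    finally show ?thesis .
  qed
  then have "F (\<one>\<^bsub>SL2 p\<^esub> \<otimes>\<^bsub>SL2 p\<^esub> X) = F \<one>\<^bsub>SL2 p\<^esub>" unfolding Inv_def by blast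
  then show ?thesis using X by simp
qed

end

lemma match_inj_a:
  assumes "\<forall>i\<in>{1..m}. \<forall>j\<in>{1..m}. \<forall>l\<in>{1..m}. (a i \<otimes>\<^bsub>G\<^esub> b j \<otimes>\<^bsub>G\<^esub> c l = \<one>\<^bsub>G\<^esub> \<longleftrightarrow> i = j \<and> j = l)"
  shows "inj_on a {1..m}"
proof (rule inj_onI)
  fix i j assume ij: "i \<in> {1..m}" "j \<in> {1..m}" "a i = a j"
  have "a i \<otimes>\<^bsub>G\<^esub> b i \<otimes>\<^bsub>G\<^esub> c i = \<one>\<^bsub>G\<^esub>" using assms[rule_format, OF ij(1) ij(1) ij(1)] by simp
  then have "a j \<otimes>\<^bsub>G\<^esub> b i \<otimes>\<^bsub>G\<^esub> c i = \<one>\<^bsub>G\<^esub>" using ij by simp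
  then show "i = j" using assms[rule_format, OF ij(2) ij(1) ij(1)] by simp
qed

lemma match_le_card:
  assumes fin: "finite (carrier G)" and mm: "mult_3_matching G m"
  shows "m \<le> card (carrier G)"
proof -
  obtain a b c where abc: "\<forall>i\<in>{1..m}. a i \<in> carrier G \<and> b i \<in> carrier G \<and> c i \<in> carrier G"
    and mt: "\<forall>i\<in>{1..m}. \<forall>j\<in>{1..m}. \<forall>l\<in>{1..m}. (a i \<otimes>\<^bsub>G\<^esub> b j \<otimes>\<^bsub>G\<^esub> c l = \<one>\<^bsub>G\<^esub> \<longleftrightarrow> i = j \<and> j = l)"
    using mm unfolding mult_3_matching_def by (elim exE conjE) (erule (1) that)
  have "a ` {1..m} \<subseteq> carrier G" using abc by blast
  then have "card {1..m} \<le> card (carrier G)"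
    using card_inj_on_le[OF match_inj_a[OF mt] _ fin] by blast
  then show ?thesis by simp
qed

lemma M_attained:
  assumes fin: "finite (carrier G)"
  shows "mult_3_matching G (M G)"
proof -
  let ?S = "{m. mult_3_matching G m}"
  have "?S \<subseteq> {..card (carrier G)}" using match_le_card[OF fin] by auto
  then have "finite ?S" by (rule finite_subset) simp
  moreover have "0 \<in> ?S" unfolding mult_3_matching_def by simp
  ultimately have "Max ?S \<in> ?S" by (intro Max_in) auto
  then show ?thesis unfolding M_def by simp
qed

lemma final_arith:
  fixes m P n k :: real
  assumes m1: "m \<ge> 1" and P: "P \<ge> 1" and n: "0 < n" "n \<le> P^3" and k: "k > 0" "4 * k \<ge> P"
    and h: "m ^ 3 / n \<le> m + sqrt (m ^ 3 * n / k)"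
  shows "m \<le> 3 * P powr (8/3)"
proof -
  define t where "t = sqrt m"
  have t1: "t \<ge> 1" unfolding t_def using m1 by simp
  have mt: "m = t^2" unfolding t_def using m1 by simp
  have "m ^ 3 * n / k = (m ^ 3 * n) * (1 / k)" by simp
  also have "\<dots> \<le> (m ^ 3 * P^3) * (4 / P)"
  proof (rule mult_mono)
    show "1 / k \<le> 4 / P" using k P by (simp add: field_simps)
    show "m ^ 3 * n \<le> m ^ 3 * P^3" using n m1 by (intro mult_left_mono) auto
  qed (use m1 P k in auto)
  also have "\<dots> = (2 * t^3 * P)^2" unfolding mt using P by (simp add: eval_nat_numeral field_simps)
  finally have "sqrt (m ^ 3 * n / k) \<le> sqrt ((2 * t^3 * P)^2)" by (rule real_sqrt_le_mono)
  also have "\<dots> = 2 * t^3 * P" using t1 P by simp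
  finally have sq: "sqrt (m ^ 3 * n / k) \<le> 2 * t^3 * P" .
  then have "m ^ 3 / n \<le> t^2 + 2 * t^3 * P" using h mt by simp
  then have "m ^ 3 \<le> n * (t^2 + 2 * t^3 * P)" using n by (simp add: field_simps)
  also have "\<dots> \<le> P^3 * (t^2 + 2 * t^3 * P)" using n t1 P by (intro mult_right_mono) auto
  also have "\<dots> \<le> 3 * P^4 * t^3"
  proof -
    have "t^2 \<le> t^3" using t1 by (simp add: power_increasing)
    moreover have "P^3 \<le> P^4" using P by (simp add: power_increasing)
    ultimately have "P^3 * t^2 \<le> P^4 * t^3" using P t1 by (intro mult_mono) auto
    moreover have "P^3 * (t^2 + 2 * t^3 * P) = P^3 * t^2 + 2 * (P^4 * t^3)" by (simp add: algebra_simps eval_nat_numeral)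
    moreover have "3 * P^4 * t^3 = P^4 * t^3 + 2 * (P^4 * t^3)" by simp
    ultimately show ?thesis by linarith
  qed
  finally have "t^3 * t^3 \<le> (3 * P^4) * t^3" using mt by (simp add: eval_nat_numeral algebra_simps)
  then have t3: "t^3 \<le> 3 * P^4" using t1 by (subst (asm) mult_le_cancel_right_pos) auto
  then have "m^3 \<le> 9 * P^8"
  proof -
    have "m^3 = (t^3)^2" unfolding mt by (simp flip: power_mult)
    also have "\<dots> \<le> (3 * P^4)^2" using t3 t1 by (intro power_mono) auto
    also have "\<dots> = 9 * P^8" by (simp add: power_mult_distrib flip: power_mult)
    finally show ?thesis .
  qed
  show ?thesis
  proof (rule ccontr)
    assume "\<not> m \<le> 3 * P powr (8/3)"
    then have "3 * P powr (8/3) < m" by simp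
    then have "(3 * P powr (8/3))^3 < m^3" by (intro power_strict_mono) auto
    moreover have "(3 * P powr (8/3))^3 = 27 * P^8"
    proof -
      have "(P powr (8/3))^3 = P powr 8" using P by (simp add: powr_power)
      also have "\<dots> = P^8" using P powr_realpow[of P 8] by simp
      finally show ?thesis by (simp add: power_mult_distrib)
    qed
    ultimately show False using \<open>m^3 \<le> 9 * P^8\<close> P by (smt (verit) zero_le_power)
  qed
qed

context psl begin

interpretation S: group "SL2 p" using SL2_group p1 by blast
interpretation G: group "PSL2 p" by (rule PSL2_group)

lemma gen_PSL:
  fixes f :: "(int \<times> int \<times> int \<times> int) set \<Rightarrow> complex"
  assumes hf: "\<And>Y X. Y \<in> carrier (PSL2 p) \<Longrightarrow> X \<in> carrier (PSL2 p) \<Longrightarrow>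
     f (Y \<otimes>\<^bsub>PSL2 p\<^esub> (inv\<^bsub>PSL2 p\<^esub> X \<otimes>\<^bsub>PSL2 p\<^esub> uu \<otimes>\<^bsub>PSL2 p\<^esub> X)) = f Y"
    and x: "x \<in> carrier (PSL2 p)"
  shows "f x = f \<one>\<^bsub>PSL2 p\<^esub>"
proof -
  obtain x0 where x0: "x0 \<in> carrier (SL2 p)" "x = cos x0" using x unfolding PSL2_carrier by blast
  have "(\<lambda>z. f (cos z)) x0 = (\<lambda>z. f (cos z)) \<one>\<^bsub>SL2 p\<^esub>"
  proof (rule gen_SL[OF _ x0(1)])
    fix a y assume a: "a \<in> carrier (SL2 p)" and y: "y \<in> carrier (SL2 p)"
    have "cos (a \<otimes>\<^bsub>SL2 p\<^esub> (inv\<^bsub>SL2 p\<^esub> y \<otimes>\<^bsub>SL2 p\<^esub> u0 \<otimes>\<^bsub>SL2 p\<^esub> y))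
        = cos a \<otimes>\<^bsub>PSL2 p\<^esub> (inv\<^bsub>PSL2 p\<^esub> (cos y) \<otimes>\<^bsub>PSL2 p\<^esub> uu \<otimes>\<^bsub>PSL2 p\<^esub> cos y)"
      using a y u0_in by (simp add: cos_mult cos_inv uu_def)
    then show "f (cos (a \<otimes>\<^bsub>SL2 p\<^esub> (inv\<^bsub>SL2 p\<^esub> y \<otimes>\<^bsub>SL2 p\<^esub> u0 \<otimes>\<^bsub>SL2 p\<^esub> y))) = f (cos a)"
      using hf cos_in a y by simp
  qed
  then show ?thesis using x0 cos_one by (simp add: SL2_one)
qed

lemma main_bound:
  assumes p3: "p \<ge> 3" and mm: "mult_3_matching (PSL2 p) m"
  shows "real m \<le> 3 * real_of_int p powr (8/3)"
proof (cases "m = 0")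
  case True then show ?thesis by simp
next
  case False
  obtain a b c where abc: "\<forall>i\<in>{1..m}. a i \<in> carrier (PSL2 p) \<and> b i \<in> carrier (PSL2 p) \<and> c i \<in> carrier (PSL2 p)"
    and mt: "\<forall>i\<in>{1..m}. \<forall>j\<in>{1..m}. \<forall>l\<in>{1..m}. (a i \<otimes>\<^bsub>PSL2 p\<^esub> b j \<otimes>\<^bsub>PSL2 p\<^esub> c l = \<one>\<^bsub>PSL2 p\<^esub> \<longleftrightarrow> i = j \<and> j = l)"
    using mm unfolding mult_3_matching_def by (elim exE conjE) (erule (1) that)
  define P where "P = nat p"
  define I where "I = {1..(P - 1) div 2}"
  have Pp: "int P = p" unfolding P_def using p1 by simp
  have I_prop: "0 < s \<and> int s < p \<and> 2 * int s < p" if "s \<in> I" for s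
    using that p1 unfolding I_def Pp[symmetric] by auto
  interpret Q: qrs "PSL2 p" P uu m a I dd "\<lambda>s. s^2"
  proof (unfold_locales)
    show "finite (carrier (PSL2 p))" by (rule PSL2_finite)
    show "prime P" unfolding P_def using pp by (simp add: prime_nat_iff_prime)
    show "uu \<in> carrier (PSL2 p)" by (rule uu_in)
    show "uu [^]\<^bsub>PSL2 p\<^esub> P = \<one>\<^bsub>PSL2 p\<^esub>" unfolding P_def by (rule uu_p)
    show "uu \<noteq> \<one>\<^bsub>PSL2 p\<^esub>" by (rule uu_ne)
    show "\<And>i. i \<in> {1..m} \<Longrightarrow> a i \<in> carrier (PSL2 p)" using abc by blast
    show "inj_on a {1..m}" by (rule match_inj_a[OF mt])
    show "finite I" unfolding I_def by simp
    show "\<And>i. i \<in> I \<Longrightarrow> dd i \<in> carrier (PSL2 p)" using dd_in I_prop by blast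
    show "\<And>i. i \<in> I \<Longrightarrow> inv\<^bsub>PSL2 p\<^esub> dd i \<otimes>\<^bsub>PSL2 p\<^esub> uu \<otimes>\<^bsub>PSL2 p\<^esub> dd i = uu [^]\<^bsub>PSL2 p\<^esub> (i^2)"
      using dd_conj I_prop by blast
    show "\<And>i i'. i \<in> I \<Longrightarrow> i' \<in> I \<Longrightarrow> [i^2 = i'^2] (mod P) \<Longrightarrow> i = i'"
      using sq_dist I_prop unfolding P_def by blast
    show "\<And>(f :: (int \<times> int \<times> int \<times> int) set \<Rightarrow> complex) x.
          (\<And>y g. y \<in> carrier (PSL2 p) \<Longrightarrow> g \<in> carrier (PSL2 p) \<Longrightarrow>
             f (y \<otimes>\<^bsub>PSL2 p\<^esub> (inv\<^bsub>PSL2 p\<^esub> g \<otimes>\<^bsub>PSL2 p\<^esub> uu \<otimes>\<^bsub>PSL2 p\<^esub> g)) = f y) \<Longrightarrow>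
          x \<in> carrier (PSL2 p) \<Longrightarrow> f x = f \<one>\<^bsub>PSL2 p\<^esub>"
      by (rule gen_PSL)
  qed
  have cardI: "card I = (P - 1) div 2" unfolding I_def by simp
  have P3: "P \<ge> 3" using p3 Pp by linarith
  have Ipos: "card I > 0" using cardI P3 by simp
  have "4 * card I \<ge> P" unfolding cardI using P3 by presburger
  then have k4: "4 * real (card I) \<ge> real P" by (metis of_nat_le_iff of_nat_mult of_nat_numeral)
  have cnt: "real m ^ 3 / real (card (carrier (PSL2 p))) \<le> real m + sqrt (real m ^ 3 * real (card (carrier (PSL2 p))) / real (card I))"
  proof (rule Q.counting[OF _ _ _ Ipos])
    show "\<And>i. i \<in> {1..m} \<Longrightarrow> b i \<in> carrier (PSL2 p)" using abc by blast
    show "\<And>i. i \<in> {1..m} \<Longrightarrow> c i \<in> carrier (PSL2 p)" using abc by blast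
    show "\<And>i j l. i \<in> {1..m} \<Longrightarrow> j \<in> {1..m} \<Longrightarrow> l \<in> {1..m} \<Longrightarrow>
            (a i \<otimes>\<^bsub>PSL2 p\<^esub> b j \<otimes>\<^bsub>PSL2 p\<^esub> c l = \<one>\<^bsub>PSL2 p\<^esub>) = (i = j \<and> j = l)"
      by (rule mt[rule_format])
  qed
  have n1: "card (carrier (PSL2 p)) \<le> P ^ 3" using card_PSL2_SL2 card_SL2 unfolding P_def by linarith
  have n2: "0 < card (carrier (PSL2 p))" using PSL2_finite uu_in by (metis card_gt_0_iff empty_iff)
  have "real m \<le> 3 * real P powr (8/3)"
  proof (rule final_arith[OF _ _ _ _ _ k4 cnt])
    show "1 \<le> real m" using False by simp
    show "1 \<le> real P" using P3 by simp
    show "0 < real (card (carrier (PSL2 p)))" using n2 by simp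
    show "real (card (carrier (PSL2 p))) \<le> real P ^ 3" using n1 by (metis of_nat_le_iff of_nat_power)
    show "0 < real (card I)" using Ipos by simp
  qed
  then show ?thesis using Pp by (metis of_int_of_nat_eq)
qed

end

theorem proposition1p3:
  shows "\<exists>C::real. C > 0 \<and>
           (\<forall>p::int. prime p \<longrightarrow> real (M (PSL2 p)) \<le> C * (real_of_int p) powr (8/3))"
proof (intro exI conjI allI impI)
  show "(3::real) > 0" by simp
  fix p :: int assume pp: "prime p"
  interpret psl p by unfold_locales (rule pp)
  have fin: "finite (carrier (PSL2 p))" by (rule PSL2_finite)
  have MM: "mult_3_matching (PSL2 p) (M (PSL2 p))" by (rule M_attained[OF fin])
  show "real (M (PSL2 p)) \<le> 3 * real_of_int p powr (8/3)"
  proof (cases "p \<ge> 3")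
    case True then show ?thesis using main_bound MM by blast
  next
    case False
    then have p2: "p = 2" using p1 by simp
    have "M (PSL2 p) \<le> card (carrier (PSL2 p))" by (rule match_le_card[OF fin MM])
    also have "\<dots> \<le> nat p ^ 3" using card_PSL2_SL2 card_SL2 by linarith
    finally have "real (M (PSL2 p)) \<le> 8" using p2 by simp
    also have "(8::real) \<le> 3 * 2 powr (8/3)"
    proof -
      have "(2::real) powr 2 \<le> 2 powr (8/3)" by (intro powr_mono) auto
      then show ?thesis by simp
    qed
    finally show ?thesis using p2 by simp
  qed
qed

end
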